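(* Let $\hat N$ be a population size estimator which is consistent for the model consisting of all probability vectors $(p_x)_{x\in\{0,1\}^L}$ with all $p_x>0$ and $\gamma=0$. Consider the latent heterogeneity model in which $\lambda_i$ are independent with distribution $F$ supported on $(0,1]$ and $\mathbb{P}(W_i=x\mid\lambda_i)=\lambda_i^{|x|}(1-\lambda_i)^{L-|x|}$, so that $p_x=\mathbb{E}[\lambda_i^{|x|}(1-\lambda_i)^{L-|x|}]$. If $L=2$, then necessarily $\lim_{N\to\infty}(\hat N-N)/N\le 0$. With three or more lists ($L\ge3$), the asymptotic relative bias $\lim_{N\to\infty}(\hat N-N)/N$ is positive for some such distributions $F$ and negative for others.
   Context: Multiple systems estimation setting with $L$ lists: individuals $i=1,2,3,\dots$ have independent, identically distributed list inclusion patterns $W_i\in\{0,1\}^L$ with $\mathbb{P}(W_i=x)=p_x$; $\mathbf{0}=(0,\dots,0)$ denotes non-observation, and $|x|=\sum_j x_j$. For population size $N$, observed counts are $n_x^{(N)}=\#\{i\le N:W_i=x\}$, $x\ne\mathbf{0}$. A population size estimator is a function of the observed counts; it is consistent for a model if $\hat N/N\to1$ almost surely as $N\to\infty$ whenever $(p_x)$ belongs to the model. The full-way interaction term is $\gamma=\sum_{x\in\{0,1\}^L}(-1)^{|x|+1}\log p_x$. The asymptotic relative bias is $\lim_{N\to\infty}(\hat N-N)/N$ (almost sure limit). *)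

theory Defs
  imports "HOL-Probability.Probability"
begin

text \<open>Inclusion patterns x in {0,1}^L are bool lists of length L; the count |x| is
  the number of True entries; the non-observation pattern is replicate L False.\<close>

definition patterns :: "nat \<Rightarrow> bool list set" where
  "patterns L = {x. length x = L}"

definition wt :: "bool list \<Rightarrow> nat" where
  "wt x = length (filter id x)"

definition iid :: "bool list pmf \<Rightarrow> (nat \<Rightarrow> bool list) measure" where
  "iid P = PiM UNIV (\<lambda>_::nat. measure_pmf P)"

text \<open>Observed counts n_x^(N) for x nonzero (set to 0 at the pattern 0 and at non-patterns).\<close>
definition counts :: "nat \<Rightarrow> nat \<Rightarrow> (nat \<Rightarrow> bool list) \<Rightarrow> bool list \<Rightarrow> nat" where
  "counts L N \<omega> = (\<lambda>x. if x \<in> patterns L \<and> x \<noteq> replicate L False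
                        then card {i. i < N \<and> \<omega> i = x} else 0)"

definition gamma :: "nat \<Rightarrow> bool list pmf \<Rightarrow> real" where
  "gamma L P = (\<Sum>x\<in>patterns L. (-1) ^ (wt x + 1) * ln (pmf P x))"

definition in_model :: "nat \<Rightarrow> bool list pmf \<Rightarrow> bool" where
  "in_model L P \<longleftrightarrow> set_pmf P \<subseteq> patterns L \<and> (\<forall>x\<in>patterns L. pmf P x > 0) \<and> gamma L P = 0"

definition consistent :: "nat \<Rightarrow> ((bool list \<Rightarrow> nat) \<Rightarrow> real) \<Rightarrow> bool" where
  "consistent L est \<longleftrightarrow> (\<forall>P. in_model L P \<longrightarrow>
      (AE \<omega> in iid P. (\<lambda>N. est (counts L N \<omega>) / real N) \<longlonglongrightarrow> 1))"

definition mixing_dist :: "real measure \<Rightarrow> bool" where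
  "mixing_dist F \<longleftrightarrow> prob_space F \<and> sets F = sets borel \<and> measure F {0<..1} = 1"

definition het_pmf :: "nat \<Rightarrow> real measure \<Rightarrow> bool list pmf" where
  "het_pmf L F = embed_pmf (\<lambda>x. if x \<in> patterns L
       then (LINT l|F. l ^ wt x * (1 - l) ^ (L - wt x)) else 0)"

definition asymp_rel_bias :: "nat \<Rightarrow> ((bool list \<Rightarrow> nat) \<Rightarrow> real) \<Rightarrow> real measure \<Rightarrow> real \<Rightarrow> bool" where
  "asymp_rel_bias L est F c \<longleftrightarrow>
     (AE \<omega> in iid (het_pmf L F). (\<lambda>N. (est (counts L N \<omega>) - real N) / real N) \<longlonglongrightarrow> c)"

end

theory Submission
  imports Defs
begin

lemma wt_Nil[simp]: "wt [] = 0" and wt_Cons[simp]: "wt (b # x) = (if b then Suc (wt x) else wt x)"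
  by (auto simp: wt_def)

lemma wt_le: "wt x \<le> length x"
  by (simp add: wt_def)

lemma patterns_0: "patterns 0 = {[]}"
  by (auto simp: patterns_def)

lemma patterns_Suc: "patterns (Suc L) = Cons True ` patterns L \<union> Cons False ` patterns L"
  by (auto simp: patterns_def length_Suc_conv image_iff)

lemma finite_patterns[simp]: "finite (patterns L)"
  by (induction L) (auto simp: patterns_0 patterns_Suc)

lemma sum_patterns_Suc:
  "(\<Sum>x\<in>patterns (Suc L). f x) = (\<Sum>x\<in>patterns L. f (True # x)) + (\<Sum>x\<in>patterns L. f (False # x))"
  unfolding patterns_Suc
  by (subst sum.union_disjoint) (auto simp: sum.reindex inj_on_def)

lemma sum_binom_Suc:
  fixes f :: "nat \<Rightarrow> real"
  shows "(\<Sum>k\<le>Suc L. of_nat (Suc L choose k) * f k) =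
         (\<Sum>k\<le>L. of_nat (L choose k) * f (Suc k)) + (\<Sum>k\<le>L. of_nat (L choose k) * f k)"
proof -
  have e1: "(\<Sum>k\<le>Suc L. of_nat (Suc L choose k) * f k) =
        f 0 + (\<Sum>k\<le>L. of_nat (Suc L choose Suc k) * f (Suc k))"
    by (subst sum.atMost_Suc_shift) simp
  have e2: "(\<Sum>k\<le>L. of_nat (Suc L choose Suc k) * f (Suc k)) = (\<Sum>k\<le>L. of_nat (L choose k) * f (Suc k)) + (\<Sum>k\<le>L. of_nat (L choose Suc k) * f (Suc k))"
    by (simp add: sum.distrib algebra_simps)
  have e3: "f 0 + (\<Sum>k\<le>L. of_nat (L choose Suc k) * f (Suc k)) = (\<Sum>k\<le>Suc L. of_nat (L choose k) * f k)"
    by (subst sum.atMost_Suc_shift) simp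
  have e4: "(\<Sum>k\<le>Suc L. of_nat (L choose k) * f k) = (\<Sum>k\<le>L. of_nat (L choose k) * f k)"
    by simp
  show ?thesis using e1 e2 e3 e4 by simp
qed

lemma sum_patterns_wt:
  fixes f :: "nat \<Rightarrow> real"
  shows "(\<Sum>x\<in>patterns L. f (wt x)) = (\<Sum>k\<le>L. of_nat (L choose k) * f k)"
proof (induction L arbitrary: f)
  case 0
  then show ?case by (simp add: patterns_0)
next
  case (Suc L)
  show ?case
    unfolding sum_patterns_Suc sum_binom_Suc
    using Suc[of "\<lambda>k. f (Suc k)"] Suc[of f] by simp
qed

lemma sum_patterns_alt:
  assumes "L > 0"
  shows "(\<Sum>x\<in>patterns L. (-1::real) ^ wt x) = 0"
  using choose_alternating_sum[OF assms, where 'a=real]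
  by (simp add: sum_patterns_wt[of "\<lambda>k. (-1) ^ k"] mult.commute)

lemma sum_patterns_alt_lin:
  assumes "L \<ge> 2"
  shows "(\<Sum>x\<in>patterns L. (-1::real) ^ wt x * real (wt x)) = 0"
proof -
  have "(\<Sum>x\<in>patterns L. (-1::real) ^ wt x * real (wt x)) = (\<Sum>k\<le>L. of_nat (L choose k) * ((-1)^k * real k))"
    by (rule sum_patterns_wt)
  also have "\<dots> = (\<Sum>k\<le>L. (-1)^k * of_nat k * of_nat (L choose k))"
    by (simp add: mult_ac)
  also have "\<dots> = 0" using assms by (intro choose_alternating_linear_sum) auto
  finally show ?thesis .
qed

lemma sum_patterns_binom:
  fixes a b :: real
  shows "(\<Sum>x\<in>patterns L. a ^ wt x * b ^ (L - wt x)) = (a + b) ^ L"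
proof -
  have "(\<Sum>x\<in>patterns L. a ^ wt x * b ^ (L - wt x)) = (\<Sum>k\<le>L. of_nat (L choose k) * (a ^ k * b ^ (L - k)))"
    by (rule sum_patterns_wt)
  also have "\<dots> = (a + b) ^ L"
    by (simp add: binomial_ring atLeast0AtMost mult_ac)
  finally show ?thesis .
qed

lemma zero_in_patterns: "replicate L False \<in> patterns L"
  by (simp add: patterns_def)
lemma ones_in_patterns: "replicate L True \<in> patterns L"
  by (simp add: patterns_def)
lemma wt_replicate_False[simp]: "wt (replicate L False) = 0"
  by (simp add: wt_def)
lemma wt_replicate_True[simp]: "wt (replicate L True) = L"
  by (simp add: wt_def)

definition iidG :: "'a pmf \<Rightarrow> (nat \<Rightarrow> 'a) measure" where
  "iidG R = PiM UNIV (\<lambda>_::nat. measure_pmf R)"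

lemma iid_eq: "iid P = iidG P" by (simp add: iid_def iidG_def)

lemma space_iidG[simp]: "space (iidG R) = UNIV"
  by (simp add: iidG_def space_PiM)

lemma prob_space_iidG: "prob_space (iidG R)"
  unfolding iidG_def by (rule prob_space_PiM) (rule prob_space_measure_pmf)

lemma pps: "product_prob_space (\<lambda>_::nat. measure_pmf R)"
  by unfold_locales

lemma sets_coord: "{Z. Z n = y} \<in> sets (iidG R)"
proof -
  have "(\<lambda>Z. Z n) \<in> measurable (iidG R) (measure_pmf R)"
    unfolding iidG_def by (rule measurable_component_singleton) simp
  then have "(\<lambda>Z. Z n) -` {y} \<inter> space (iidG R) \<in> sets (iidG R)"
    by (rule measurable_sets) simp
  then show ?thesis by (simp add: vimage_def)
qed

lemma sets_prefix_pt: "{Z. map Z [0..<n] = xs} \<in> sets (iidG R)"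
proof (induction n arbitrary: xs)
  case 0
  show ?case
  proof (cases "xs = []")
    case True
    then have "{Z. map Z [0..<0] = xs} = space (iidG R)" by simp
    then show ?thesis by (metis sets.top)
  next
    case False
    then have "{Z. map Z [0..<0] = xs} = {}" by auto
    then show ?thesis by simp
  qed
next
  case (Suc n)
  show ?case
  proof (cases xs rule: rev_exhaust)
    case Nil
    then have "{Z. map Z [0..<Suc n] = xs} = {}" by auto
    then show ?thesis by simp
  next
    case (snoc ys y')
    then have "{Z. map Z [0..<Suc n] = xs} = {Z. map Z [0..<n] = ys} \<inter> {Z. Z n = y'}"
      by auto
    have "{Z. map Z [0..<n] = ys} \<inter> {Z. Z n = y'} \<in> sets (iidG R)"
      by (rule sets.Int[OF Suc.IH sets_coord])
    then show ?thesis using \<open>{Z. map Z [0..<Suc n] = xs} = _\<close> by simp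
  qed
qed

lemma prefix_meas:
  "(\<lambda>Z. map Z [0..<n]) \<in> measurable (iidG (R :: 'a::countable pmf)) (count_space UNIV)"
proof (subst measurable_count_space_eq2_countable, safe)
  fix xs :: "'a list"
  have "(\<lambda>Z. map Z [0..<n]) -` {xs} \<inter> space (iidG R) = {Z. map Z [0..<n] = xs}" by auto
  then show "(\<lambda>Z. map Z [0..<n]) -` {xs} \<inter> space (iidG R) \<in> sets (iidG R)"
    using sets_prefix_pt by metis
qed auto

lemma sets_prefix: "{Z. H (map Z [0..<n])} \<in> sets (iidG (R :: 'a::countable pmf))"
proof -
  have "(\<lambda>Z. map Z [0..<n]) -` {xs. H xs} \<inter> space (iidG R) \<in> sets (iidG R)"
    by (rule measurable_sets[OF prefix_meas]) simp
  then show ?thesis by (simp add: vimage_def)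
qed

lemma meas_prefix_fun: "(\<lambda>Z. f (map Z [0..<n])) \<in> measurable (iidG (R :: 'a::countable pmf)) M"
  if "f \<in> UNIV \<rightarrow> space M"
  by (rule measurable_compose[OF prefix_meas]) (simp add: measurable_count_space_eq1 that)

lemma emeasure_prefix_pt:
  assumes "length xs = n"
  shows "emeasure (iidG R) {Z. map Z [0..<n] = xs} = (\<Prod>i<n. ennreal (pmf R (xs ! i)))"
proof -
  interpret product_prob_space "\<lambda>_::nat. measure_pmf R" UNIV by (rule pps)
  have "{Z. map Z [0..<n] = xs} = {Z \<in> space (PiM UNIV (\<lambda>_::nat. measure_pmf R)). \<forall>i\<in>{..<n}. Z i \<in> {xs ! i}}"
    using assms by (auto simp: space_PiM list_eq_iff_nth_eq)
  then have "emeasure (iidG R) {Z. map Z [0..<n] = xs} = (\<Prod>i\<in>{..<n}. emeasure (measure_pmf R) {xs ! i})"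
    unfolding iidG_def by (simp only:) (rule emeasure_PiM_Collect, auto)
  then show ?thesis by (simp add: emeasure_pmf_single)
qed

lemma pmf_replicate:
  "pmf (replicate_pmf n R) xs = (if length xs = n then \<Prod>i<n. pmf R (xs ! i) else 0)"
proof (induction n arbitrary: xs)
  case 0
  then show ?case by (simp add: pmf_return indicator_def)
next
  case (Suc n)
  have eq: "replicate_pmf (Suc n) R = map_pmf (\<lambda>(x, xs). x # xs) (pair_pmf R (replicate_pmf n R))"
    by (simp add: pair_pmf_def map_pmf_def bind_assoc_pmf bind_return_pmf)
  show ?case
  proof (cases xs)
    case Nil
    then have "pmf (replicate_pmf (Suc n) R) xs = 0"
      unfolding eq by (subst pmf_eq_0_set_pmf) auto
    then show ?thesis using Nil by simp
  next
    case (Cons x ys)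
    have inj: "inj (\<lambda>(x::'a, xs). x # xs)" by (auto simp: inj_def)
    have "pmf (replicate_pmf (Suc n) R) xs = pmf (pair_pmf R (replicate_pmf n R)) (x, ys)"
      unfolding eq Cons using pmf_map_inj'[OF inj, of _ "(x, ys)"] by simp
    also have "\<dots> = pmf R x * pmf (replicate_pmf n R) ys" by (simp add: pmf_pair)
    finally show ?thesis using Suc[of ys] Cons
      by (simp del: prod.lessThan_Suc add: prod.lessThan_Suc_shift)
  qed
qed

lemma distr_prefix:
  "distr (iidG R) (count_space UNIV) (\<lambda>Z. map Z [0..<n]) = measure_pmf (replicate_pmf n (R :: 'a::countable pmf))"
proof (rule measure_eqI_countable[where A = UNIV])
  fix xs :: "'a list"
  have "emeasure (distr (iidG R) (count_space UNIV) (\<lambda>Z. map Z [0..<n])) {xs} =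
        emeasure (iidG R) {Z. map Z [0..<n] = xs}"
    by (subst emeasure_distr[OF prefix_meas]) (auto simp: vimage_def)
  also have "\<dots> = emeasure (measure_pmf (replicate_pmf n R)) {xs}"
  proof (cases "length xs = n")
    case True
    then show ?thesis
      by (simp add: emeasure_prefix_pt emeasure_pmf_single pmf_replicate prod_ennreal)
  next
    case False
    then have "{Z. map Z [0..<n] = xs} = {}" by auto
    then show ?thesis using False by (simp add: emeasure_pmf_single pmf_replicate)
  qed
  finally show "emeasure (distr (iidG R) (count_space UNIV) (\<lambda>Z. map Z [0..<n])) {xs} =
        emeasure (measure_pmf (replicate_pmf n R)) {xs}" .
qed auto

lemma emeasure_prefix_set:
  "emeasure (iidG R) {Z. map Z [0..<n] \<in> S} = emeasure (measure_pmf (replicate_pmf n (R :: 'a::countable pmf))) S"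
proof -
  have "emeasure (measure_pmf (replicate_pmf n R)) S = emeasure (distr (iidG R) (count_space UNIV) (\<lambda>Z. map Z [0..<n])) S"
    by (simp add: distr_prefix)
  also have "\<dots> = emeasure (iidG R) {Z. map Z [0..<n] \<in> S}"
    by (subst emeasure_distr[OF prefix_meas]) (auto simp: vimage_def)
  finally show ?thesis by simp
qed

lemma measure_prefix_set:
  "measure (iidG R) {Z. map Z [0..<n] \<in> S} = measure_pmf.prob (replicate_pmf n (R :: 'a::countable pmf)) S"
  using emeasure_prefix_set[of R n S] by (simp add: measure_def)

lemma measure_replicate_prod:
  "measure_pmf.prob (replicate_pmf n R) {xs. length xs = n \<and> (\<forall>i<n. xs ! i \<in> A i)} =
   (\<Prod>i<n. measure_pmf.prob (R :: 'a::countable pmf) (A i))"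
proof (induction n arbitrary: A)
  case 0
  then show ?case by (simp add: measure_return indicator_def)
next
  case (Suc n)
  have eq: "replicate_pmf (Suc n) R = map_pmf (\<lambda>(x, xs). x # xs) (pair_pmf R (replicate_pmf n R))"
    by (simp add: pair_pmf_def map_pmf_def bind_assoc_pmf bind_return_pmf)
  have pre: "(\<lambda>(x, xs). x # xs) -` {xs. length xs = Suc n \<and> (\<forall>i<Suc n. xs ! i \<in> A i)} =
         A 0 \<times> {xs. length xs = n \<and> (\<forall>i<n. xs ! i \<in> A (Suc i))}"
    by (auto simp: All_less_Suc2 length_Suc_conv)
  show ?case
    unfolding eq measure_map_pmf pre
    by (subst measure_pmf_prob_product) (auto simp del: prod.lessThan_Suc simp: Suc prod.lessThan_Suc_shift)
qed

lemma iidG_eqI: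
  fixes P :: "'a::countable pmf"
  assumes sets: "sets M = sets (iidG P)"
    and eq: "\<And>n S. emeasure M {Z \<in> space M. map Z [0..<n] \<in> S} = emeasure (measure_pmf (replicate_pmf n P)) S"
  shows "M = iidG P"
proof -
  interpret product_prob_space "\<lambda>_::nat. measure_pmf P" UNIV by (rule pps)
  have sp: "space M = UNIV" using sets_eq_imp_space_eq[OF sets] by simp
  show ?thesis unfolding iidG_def
  proof (rule PiM_eq)
    show "sets M = sets (Pi\<^sub>M UNIV (\<lambda>_. measure_pmf P))" using sets by (simp add: iidG_def)
  next
    fix J :: "nat set" and F assume J: "finite J" "J \<subseteq> UNIV" and F: "\<And>j. j \<in> J \<Longrightarrow> F j \<in> sets (measure_pmf P)"
    define n where "n = (if J = {} then 0 else Suc (Max J))"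
    have Jn: "J \<subseteq> {..<n}" using J by (auto simp: n_def less_Suc_eq_le)
    define A where "A i = (if i \<in> J then F i else UNIV)" for i
    have E: "prod_emb UNIV (\<lambda>_. measure_pmf P) J (Pi\<^sub>E J F) = {Z \<in> space M. map Z [0..<n] \<in> {xs. length xs = n \<and> (\<forall>i<n. xs ! i \<in> A i)}}"
      using Jn by (auto simp: prod_emb_def sp A_def space_PiM PiE_iff) (meson Jn lessThan_iff subsetD)
    have "emeasure M (prod_emb UNIV (\<lambda>_. measure_pmf P) J (Pi\<^sub>E J F)) =
       emeasure (measure_pmf (replicate_pmf n P)) {xs. length xs = n \<and> (\<forall>i<n. xs ! i \<in> A i)}"
      unfolding E by (rule eq)
    also have "\<dots> = ennreal (\<Prod>i<n. measure_pmf.prob P (A i))"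
      by (simp add: measure_pmf.emeasure_eq_measure measure_replicate_prod)
    also have "(\<Prod>i<n. measure_pmf.prob P (A i)) = (\<Prod>i\<in>J. measure_pmf.prob P (F i))"
      using Jn by (intro prod.mono_neutral_cong_right) (auto simp: A_def)
    also have "ennreal \<dots> = (\<Prod>j\<in>J. emeasure (measure_pmf P) (F j))"
      by (simp add: measure_pmf.emeasure_eq_measure prod_ennreal)
    finally show "emeasure M (prod_emb UNIV (\<lambda>_. measure_pmf P) J (Pi\<^sub>E J F)) = (\<Prod>j\<in>J. emeasure (measure_pmf P) (F j))" .
  qed
qed

definition cnt :: "('r \<Rightarrow> bool) \<Rightarrow> (nat \<Rightarrow> 'r) \<Rightarrow> nat \<Rightarrow> nat" where
  "cnt b Z i = length (filter b (map Z [0..<i]))"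

definition Phi :: "('r \<Rightarrow> bool) \<Rightarrow> ('r \<Rightarrow> 'a) \<Rightarrow> 'a \<Rightarrow> (nat \<Rightarrow> 'r) \<Rightarrow> nat \<Rightarrow> 'a" where
  "Phi b y z0 Z i = (if b (Z i) then y (Z (cnt b Z i)) else z0)"

definition psi :: "('r \<Rightarrow> bool) \<Rightarrow> ('r \<Rightarrow> 'a) \<Rightarrow> 'a \<Rightarrow> 'r list \<Rightarrow> 'a list" where
  "psi b y z0 zs = map (\<lambda>i. if b (zs ! i) then y (zs ! length (filter b (take i zs))) else z0) [0..<length zs]"

definition mix :: "real \<Rightarrow> 'a pmf \<Rightarrow> 'a \<Rightarrow> 'a pmf" where
  "mix s Q z0 = map_pmf (\<lambda>(c, v). if c then v else z0) (pair_pmf (bernoulli_pmf s) Q)"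

lemma cnt_le: "cnt b Z i \<le> i"
  unfolding cnt_def by (metis length_filter_le length_map length_upt minus_nat.diff_0)

lemma cnt_Suc: "cnt b Z (Suc i) = cnt b Z i + (if b (Z i) then 1 else 0)"
  by (simp add: cnt_def)

lemma cnt_0[simp]: "cnt b Z 0 = 0" by (simp add: cnt_def)

lemma prefix_Phi: "map (Phi b y z0 Z) [0..<n] = psi b y z0 (map Z [0..<n])"
proof (rule nth_equalityI)
  fix i assume "i < length (map (Phi b y z0 Z) [0..<n])"
  then have i: "i < n" by simp
  have tk: "take i (map Z [0..<n]) = map Z [0..<i]" using i by (simp add: take_map)
  have cn: "cnt b Z i < n" using cnt_le[of b Z i] i by linarith
  have c: "length (filter b (take i (map Z [0..<n]))) = cnt b Z i"
    by (simp add: tk cnt_def)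
  have "psi b y z0 (map Z [0..<n]) ! i = (if b (Z i) then y (map Z [0..<n] ! cnt b Z i) else z0)"
    using i unfolding psi_def c[symmetric] by simp
  also have "\<dots> = Phi b y z0 Z i" using cn by (simp add: Phi_def)
  finally show "map (Phi b y z0 Z) [0..<n] ! i = psi b y z0 (map Z [0..<n]) ! i"
    using i by simp
qed (simp add: psi_def)

lemma pmf_mix:
  fixes Q :: "'a::countable pmf"
  assumes "0 \<le> s" "s \<le> 1" "z0 \<notin> set_pmf Q"
  shows "pmf (mix s Q z0) x = (if x = z0 then 1 - s else s * pmf Q x)"
proof -
  have "pmf (mix s Q z0) x = measure_pmf.prob (pair_pmf (bernoulli_pmf s) Q) ((\<lambda>(c, v). if c then v else z0) -` {x})"
    unfolding mix_def pmf_map ..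
  also have "\<dots> = (if x = z0 then 1 - s else s * pmf Q x)"
  proof (cases "x = z0")
    case True
    have "(\<lambda>(c, v). if c then v else z0) -` {x} = {False} \<times> UNIV \<union> {True} \<times> {z0}"
      using True by auto
    then have "measure_pmf.prob (pair_pmf (bernoulli_pmf s) Q) ((\<lambda>(c, v). if c then v else z0) -` {x}) =
      measure_pmf.prob (pair_pmf (bernoulli_pmf s) Q) ({False} \<times> UNIV) + measure_pmf.prob (pair_pmf (bernoulli_pmf s) Q) ({True} \<times> {z0})"
      by (simp only:) (rule measure_pmf.finite_measure_Union, auto)
    also have "\<dots> = 1 - s"
      using assms by (simp add: measure_pmf_prob_product measure_pmf_single pmf_eq_0_set_pmf)
    finally show ?thesis using True by simp
  next
    case False
    have "(\<lambda>(c, v). if c then v else z0) -` {x} = {True} \<times> {x}"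
      using False by (auto split: if_splits)
    then show ?thesis
      using assms False by (simp add: measure_pmf_single pmf_pair)
  qed
  finally show ?thesis .
qed

lemma filter_nth_take:
  assumes "i < length xs" "P (xs ! i)"
  shows "length (filter P (take i xs)) < length (filter P xs) \<and> filter P xs ! length (filter P (take i xs)) = xs ! i"
proof -
  have xs: "xs = take i xs @ xs ! i # drop (Suc i) xs" using assms(1) by (rule id_take_nth_drop)
  have "filter P xs = filter P (take i xs) @ xs ! i # filter P (drop (Suc i) xs)"
    using assms(2) by (subst xs) simp
  then show ?thesis by (simp add: nth_append)
qed

lemma filter_nth_surj:
  "j < length (filter P xs) \<Longrightarrow> \<exists>i<length xs. P (xs ! i) \<and> length (filter P (take i xs)) = j"
proof (induction xs arbitrary: j)
  case Nil
  then show ?case by simp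
next
  case (Cons x xs)
  show ?case
  proof (cases "P x")
    case True
    show ?thesis
    proof (cases j)
      case 0
      then show ?thesis using True by (intro exI[of _ 0]) auto
    next
      case (Suc j')
      then obtain i where "i < length xs" "P (xs ! i)" "length (filter P (take i xs)) = j'"
        using Cons.IH[of j'] Cons.prems True by auto
      then show ?thesis using True Suc by (intro exI[of _ "Suc i"]) auto
    qed
  next
    case False
    then obtain i where "i < length xs" "P (xs ! i)" "length (filter P (take i xs)) = j"
      using Cons.IH[of j] Cons.prems by auto
    then show ?thesis using False by (intro exI[of _ "Suc i"]) auto
  qed
qed

lemma length_filter_take_eq:
  assumes "map b zs = map P xs"
  shows "length (filter b (take i zs)) = length (filter P (take i xs))"
proof -
  have "map b (take i zs) = map P (take i xs)" using assms by (metis take_map)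
  then have "length (filter id (map b (take i zs))) = length (filter id (map P (take i xs)))" by simp
  then show ?thesis by (simp add: filter_map o_def)
qed

lemma psi_eq_iff:
  assumes y: "\<forall>z\<in>set zs. y z \<noteq> z0"
  shows "psi b y z0 zs = xs \<longleftrightarrow> length xs = length zs \<and> (\<forall>i<length zs. b (zs ! i) = (xs ! i \<noteq> z0)) \<and>
      (\<forall>j<length (filter (\<lambda>x. x \<noteq> z0) xs). y (zs ! j) = filter (\<lambda>x. x \<noteq> z0) xs ! j)"
    (is "?L \<longleftrightarrow> ?R")
proof
  assume L: ?L
  have len: "length xs = length zs" using L by (auto simp: psi_def)
  have xsi: "xs ! i = (if b (zs ! i) then y (zs ! length (filter b (take i zs))) else z0)" if "i < length zs" for i
    using L that by (auto simp: psi_def)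
  have cl: "length (filter b (take i zs)) < length zs" if "i < length zs" for i
    using that by (metis length_filter_le length_take min.absorb4 order.strict_trans2 take_all_iff verit_comp_simplify1(3) not_less)
  have bi: "b (zs ! i) = (xs ! i \<noteq> z0)" if "i < length zs" for i
  proof -
    have "zs ! length (filter b (take i zs)) \<in> set zs" using cl[OF that] by (rule nth_mem)
    then have "y (zs ! length (filter b (take i zs))) \<noteq> z0" using y by blast
    then show ?thesis using xsi[OF that] by auto
  qed
  have mb: "map b zs = map (\<lambda>x. x \<noteq> z0) xs" using bi len by (intro nth_equalityI) auto
  show ?R
  proof (intro conjI allI impI)
    show "length xs = length zs" by (fact len)
    fix i assume "i < length zs" then show "b (zs ! i) = (xs ! i \<noteq> z0)" by (rule bi)
  next
    fix j assume j: "j < length (filter (\<lambda>x. x \<noteq> z0) xs)"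
    obtain i where i: "i < length xs" "xs ! i \<noteq> z0" "length (filter (\<lambda>x. x \<noteq> z0) (take i xs)) = j"
      using filter_nth_surj[OF j] by blast
    have "filter (\<lambda>x. x \<noteq> z0) xs ! j = xs ! i" using filter_nth_take[of i xs "\<lambda>x. x \<noteq> z0"] i by simp
    also have "\<dots> = y (zs ! length (filter b (take i zs)))" using xsi[of i] i len bi[of i] by simp
    also have "length (filter b (take i zs)) = j" using length_filter_take_eq[OF mb] i by simp
    finally show "y (zs ! j) = filter (\<lambda>x. x \<noteq> z0) xs ! j" by simp
  qed
next
  assume R: ?R
  have len: "length xs = length zs" using R by simp
  have mb: "map b zs = map (\<lambda>x. x \<noteq> z0) xs" using R by (intro nth_equalityI) auto
  show ?L unfolding psi_def
  proof (rule nth_equalityI)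
    show "length (map (\<lambda>i. if b (zs ! i) then y (zs ! length (filter b (take i zs))) else z0) [0..<length zs]) = length xs"
      using len by simp
    fix i assume "i < length (map (\<lambda>i. if b (zs ! i) then y (zs ! length (filter b (take i zs))) else z0) [0..<length zs])"
    then have i: "i < length zs" by simp
    show "map (\<lambda>i. if b (zs ! i) then y (zs ! length (filter b (take i zs))) else z0) [0..<length zs] ! i = xs ! i"
    proof (cases "b (zs ! i)")
      case True
      then have nz: "xs ! i \<noteq> z0" using R i by auto
      have c: "length (filter b (take i zs)) = length (filter (\<lambda>x. x \<noteq> z0) (take i xs))"
        by (rule length_filter_take_eq[OF mb])
      from filter_nth_take[of i xs "\<lambda>x. x \<noteq> z0"] nz i len
      have "length (filter (\<lambda>x. x \<noteq> z0) (take i xs)) < length (filter (\<lambda>x. x \<noteq> z0) xs)"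
           "filter (\<lambda>x. x \<noteq> z0) xs ! length (filter (\<lambda>x. x \<noteq> z0) (take i xs)) = xs ! i" by auto
      then show ?thesis using R True i c by auto
    next
      case False
      then show ?thesis using R i by auto
    qed
  qed
qed

lemma prod_list_mix:
  fixes Q :: "'a::countable pmf"
  assumes "0 \<le> s" "s \<le> 1" "z0 \<notin> set_pmf Q"
  shows "prod_list (map (pmf (mix s Q z0)) xs) =
    prod_list (map (\<lambda>x. pmf (bernoulli_pmf s) (x \<noteq> z0)) xs) * prod_list (map (pmf Q) (filter (\<lambda>x. x \<noteq> z0) xs))"
  by (induction xs) (use assms in \<open>auto simp: pmf_mix\<close>)

lemma prod_lessThan_list: "(\<Prod>i<length xs. f (xs ! i)) = prod_list (map f xs)"
  by (induction xs) (simp_all del: prod.lessThan_Suc add: prod.lessThan_Suc_shift)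

lemma map_psi_replicate:
  fixes R :: "'r::countable pmf" and Q :: "'a::countable pmf"
  assumes R: "map_pmf (\<lambda>z. (b z, y z)) R = pair_pmf (bernoulli_pmf s) Q"
    and z0: "z0 \<notin> set_pmf Q" and s: "0 \<le> s" "s \<le> 1"
  shows "map_pmf (psi b y z0) (replicate_pmf n R) = replicate_pmf n (mix s Q z0)"
proof (rule pmf_eqI)
  fix xs :: "'a list"
  have yR: "y z \<noteq> z0" if "z \<in> set_pmf R" for z
  proof -
    have "(b z, y z) \<in> set_pmf (map_pmf (\<lambda>z. (b z, y z)) R)" using that by simp
    then have "y z \<in> set_pmf Q" unfolding R by simp
    then show ?thesis using z0 by auto
  qed
  have lenpsi: "length (psi b y z0 zs) = length zs" for zs by (simp add: psi_def)
  show "pmf (map_pmf (psi b y z0) (replicate_pmf n R)) xs = pmf (replicate_pmf n (mix s Q z0)) xs"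
  proof (cases "length xs = n")
    case False
    have "pmf (map_pmf (psi b y z0) (replicate_pmf n R)) xs = 0"
      using False by (subst pmf_eq_0_set_pmf) (auto simp: set_replicate_pmf lenpsi)
    then show ?thesis using False by (simp add: pmf_replicate)
  next
    case True
    define ys where "ys = filter (\<lambda>x. x \<noteq> z0) xs"
    define m where "m = length ys"
    have mn: "m \<le> n" by (metis True length_filter_le m_def ys_def)
    define A where "A i = {z. b z = (xs ! i \<noteq> z0) \<and> (i < m \<longrightarrow> y z = ys ! i)}" for i
    have "pmf (map_pmf (psi b y z0) (replicate_pmf n R)) xs =
          measure_pmf.prob (replicate_pmf n R) (psi b y z0 -` {xs} \<inter> set_pmf (replicate_pmf n R))"
      by (simp add: pmf_map measure_Int_set_pmf)
    also have "psi b y z0 -` {xs} \<inter> set_pmf (replicate_pmf n R) =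
        {zs. length zs = n \<and> (\<forall>i<n. zs ! i \<in> A i)} \<inter> set_pmf (replicate_pmf n R)"
    proof (intro set_eqI iffI)
      fix zs assume zs: "zs \<in> psi b y z0 -` {xs} \<inter> set_pmf (replicate_pmf n R)"
      then have len: "length zs = n" and yz: "\<forall>z\<in>set zs. y z \<noteq> z0"
        using yR by (auto simp: set_replicate_pmf)
      from zs have "psi b y z0 zs = xs" by simp
      then have R': "(\<forall>i<length zs. b (zs ! i) = (xs ! i \<noteq> z0)) \<and>
        (\<forall>j<m. y (zs ! j) = ys ! j)" using psi_eq_iff[OF yz] by (simp add: m_def ys_def)
      then show "zs \<in> {zs. length zs = n \<and> (\<forall>i<n. zs ! i \<in> A i)} \<inter> set_pmf (replicate_pmf n R)"
        using zs len mn by (auto simp: A_def)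
    next
      fix zs assume zs: "zs \<in> {zs. length zs = n \<and> (\<forall>i<n. zs ! i \<in> A i)} \<inter> set_pmf (replicate_pmf n R)"
      then have len: "length zs = n" and yz: "\<forall>z\<in>set zs. y z \<noteq> z0"
        using yR by (auto simp: set_replicate_pmf)
      have "psi b y z0 zs = xs"
        using zs len mn True by (subst psi_eq_iff[OF yz]) (auto simp: A_def m_def ys_def)
      then show "zs \<in> psi b y z0 -` {xs} \<inter> set_pmf (replicate_pmf n R)" using zs by simp
    qed
    also have "measure_pmf.prob (replicate_pmf n R) ({zs. length zs = n \<and> (\<forall>i<n. zs ! i \<in> A i)} \<inter> set_pmf (replicate_pmf n R))
       = (\<Prod>i<n. measure_pmf.prob R (A i))"
      by (simp add: measure_Int_set_pmf measure_replicate_prod)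
    also have "\<dots> = (\<Prod>i<n. pmf (bernoulli_pmf s) (xs ! i \<noteq> z0) * (if i < m then pmf Q (ys ! i) else 1))"
    proof (rule prod.cong[OF refl])
      fix i
      have "measure_pmf.prob R (A i) = measure_pmf.prob (map_pmf (\<lambda>z. (b z, y z)) R)
               ({xs ! i \<noteq> z0} \<times> (if i < m then {ys ! i} else UNIV))"
        by (simp add: A_def vimage_def)
      also have "\<dots> = pmf (bernoulli_pmf s) (xs ! i \<noteq> z0) * (if i < m then pmf Q (ys ! i) else 1)"
        unfolding R by (subst measure_pmf_prob_product) (auto simp: measure_pmf_single)
      finally show "measure_pmf.prob R (A i) = pmf (bernoulli_pmf s) (xs ! i \<noteq> z0) * (if i < m then pmf Q (ys ! i) else 1)" .
    qed
    also have "\<dots> = (\<Prod>i<n. pmf (bernoulli_pmf s) (xs ! i \<noteq> z0)) * (\<Prod>i<n. if i < m then pmf Q (ys ! i) else 1)"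
      by (rule prod.distrib)
    also have "(\<Prod>i<n. if i < m then pmf Q (ys ! i) else 1) = (\<Prod>i<m. pmf Q (ys ! i))"
      using mn by (intro prod.mono_neutral_cong_right) auto
    also have "(\<Prod>i<n. pmf (bernoulli_pmf s) (xs ! i \<noteq> z0)) * (\<Prod>i<m. pmf Q (ys ! i)) =
        prod_list (map (pmf (mix s Q z0)) xs)"
      using prod_lessThan_list[where xs=xs and f="\<lambda>x. pmf (bernoulli_pmf s) (x \<noteq> z0)"]
            prod_lessThan_list[where xs=ys and f="pmf Q"] True
      by (simp add: prod_list_mix[OF s z0] m_def ys_def)
    also have "\<dots> = pmf (replicate_pmf n (mix s Q z0)) xs"
      using True by (simp add: pmf_replicate prod_lessThan_list[symmetric])
    finally show ?thesis .
  qed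
qed

lemma Phi_meas:
  "Phi b y z0 \<in> measurable (iidG (R :: 'r::countable pmf)) (iidG (P :: 'a pmf))"
proof -
  have "(\<lambda>Z. Phi b y z0 Z i) \<in> measurable (iidG R) (measure_pmf P)" for i
  proof -
    have "(\<lambda>Z. Phi b y z0 Z i) = (\<lambda>Z. psi b y z0 (map Z [0..<Suc i]) ! i)"
      by (rule ext) (metis prefix_Phi lessI nth_map_upt add_0 diff_zero)
    then show ?thesis by (simp only:) (rule meas_prefix_fun, simp)
  qed
  then show ?thesis unfolding iidG_def
    by (intro measurable_PiM_single') (auto simp: iidG_def)
qed

lemma distr_Phi:
  fixes R :: "'r::countable pmf" and Q :: "'a::countable pmf"
  assumes R: "map_pmf (\<lambda>z. (b z, y z)) R = pair_pmf (bernoulli_pmf s) Q"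
    and z0: "z0 \<notin> set_pmf Q" and s: "0 \<le> s" "s \<le> 1"
  shows "distr (iidG R) (iidG (mix s Q z0)) (Phi b y z0) = iidG (mix s Q z0)"
proof (rule iidG_eqI)
  show "sets (distr (iidG R) (iidG (mix s Q z0)) (Phi b y z0)) = sets (iidG (mix s Q z0))" by simp
  fix n S
  have "emeasure (distr (iidG R) (iidG (mix s Q z0)) (Phi b y z0))
          {Z \<in> space (distr (iidG R) (iidG (mix s Q z0)) (Phi b y z0)). map Z [0..<n] \<in> S}
       = emeasure (iidG R) {Z. map Z [0..<n] \<in> psi b y z0 -` S}"
    by (subst emeasure_distr[OF Phi_meas]) (auto simp: vimage_def prefix_Phi intro: sets_prefix)
  also have "\<dots> = emeasure (measure_pmf (replicate_pmf n R)) (psi b y z0 -` S)"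
    by (rule emeasure_prefix_set)
  also have "\<dots> = emeasure (measure_pmf (map_pmf (psi b y z0) (replicate_pmf n R))) S"
    by simp
  also have "\<dots> = emeasure (measure_pmf (replicate_pmf n (mix s Q z0))) S"
    by (simp only: map_psi_replicate[OF R z0 s])
  finally show "emeasure (distr (iidG R) (iidG (mix s Q z0)) (Phi b y z0))
          {Z \<in> space (distr (iidG R) (iidG (mix s Q z0)) (Phi b y z0)). map Z [0..<n] \<in> S}
       = emeasure (measure_pmf (replicate_pmf n (mix s Q z0))) S" .
qed

definition CY :: "nat \<Rightarrow> (nat \<Rightarrow> bool list) \<Rightarrow> nat \<Rightarrow> bool list \<Rightarrow> nat" where
  "CY L Y k = (\<lambda>x. if x \<in> patterns L \<and> x \<noteq> replicate L False then card {j. j < k \<and> Y j = x} else 0)"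

lemma counts_CY: "counts L N \<omega> = CY L \<omega> N"
  by (simp add: counts_def CY_def)

lemma card_lt_Suc: "card {i. i < Suc N \<and> P i} = card {i. i < N \<and> P i} + (if P N then 1 else 0)"
proof -
  have "{i. i < Suc N \<and> P i} = (if P N then insert N {i. i < N \<and> P i} else {i. i < N \<and> P i})"
    by (auto simp: less_Suc_eq)
  then show ?thesis by simp
qed

lemma counts_Phi: "counts L N (Phi b y (replicate L False) Z) = CY L (\<lambda>j. y (Z j)) (cnt b Z N)"
proof (rule ext)
  fix x
  show "counts L N (Phi b y (replicate L False) Z) x = CY L (\<lambda>j. y (Z j)) (cnt b Z N) x"
  proof (cases "x \<in> patterns L \<and> x \<noteq> replicate L False")
    case False
    then show ?thesis by (simp only: counts_def CY_def False if_False)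
  next
    case True
    have "card {i. i < N \<and> Phi b y (replicate L False) Z i = x} = card {j. j < cnt b Z N \<and> y (Z j) = x}"
    proof (induction N)
      case 0
      then show ?case by simp
    next
      case (Suc N)
      have ph: "Phi b y (replicate L False) Z N = x \<longleftrightarrow> b (Z N) \<and> y (Z (cnt b Z N)) = x"
        using True by (auto simp: Phi_def)
      show ?case
        unfolding card_lt_Suc cnt_Suc using Suc ph
        by (cases "b (Z N)") (simp_all add: card_lt_Suc[of "cnt b Z N", simplified])
    qed
    then show ?thesis using True by (simp add: counts_def CY_def)
  qed
qed

lemma map_pmf_map_replicate: "map_pmf (map f) (replicate_pmf n R) = replicate_pmf n (map_pmf f R)"
proof (induction n)
  case 0
  then show ?case by simp
next
  case (Suc n)
  then show ?case by (simp add: map_bind_pmf bind_map_pmf flip: Suc.IH)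
qed

lemma binom_cnt:
  assumes "map_pmf b R = bernoulli_pmf s" "0 \<le> s" "s \<le> 1"
  shows "map_pmf (\<lambda>zs. length (filter b zs)) (replicate_pmf n R) = binomial_pmf n s"
proof -
  have "binomial_pmf n s = map_pmf (length \<circ> filter id) (replicate_pmf n (bernoulli_pmf s))"
    using assms by (intro binomial_pmf_altdef) auto
  also have "\<dots> = map_pmf (length \<circ> filter id) (map_pmf (map b) (replicate_pmf n R))"
    by (simp add: map_pmf_map_replicate assms(1))
  also have "\<dots> = map_pmf (\<lambda>zs. length (filter b zs)) (replicate_pmf n R)"
    by (simp add: map_pmf_comp filter_map o_def)
  finally show ?thesis by simp
qed




lemma tendsto_iff_nat:
  fixes f :: "nat \<Rightarrow> real"
  shows "f \<longlonglongrightarrow> c \<longleftrightarrow> (\<forall>m::nat. \<exists>N0. \<forall>N\<ge>N0. \<bar>f N - c\<bar> < 1 / real (Suc m))"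
proof
  assume "f \<longlonglongrightarrow> c"
  then show "\<forall>m::nat. \<exists>N0. \<forall>N\<ge>N0. \<bar>f N - c\<bar> < 1 / real (Suc m)"
    unfolding LIMSEQ_def dist_real_def by simp
next
  assume H: "\<forall>m::nat. \<exists>N0. \<forall>N\<ge>N0. \<bar>f N - c\<bar> < 1 / real (Suc m)"
  show "f \<longlonglongrightarrow> c" unfolding LIMSEQ_def dist_real_def
  proof (intro allI impI)
    fix r :: real assume r: "r > 0"
    obtain n :: nat where n: "n > 0" "inverse (real n) < r" using ex_inverse_of_nat_less[OF r] by auto
    obtain N0 where N0: "\<forall>N\<ge>N0. \<bar>f N - c\<bar> < 1 / real (Suc (n - 1))" using H by blast
    have eq: "1 / real (Suc (n - 1)) = inverse (real n)" using n by (simp add: field_simps)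
    have "\<forall>N\<ge>N0. \<bar>f N - c\<bar> < r"
    proof (intro allI impI)
      fix N assume "N \<ge> N0"
      then have "\<bar>f N - c\<bar> < inverse (real n)" using N0 eq by auto
      then show "\<bar>f N - c\<bar> < r" using n(2) by linarith
    qed
    then show "\<exists>no. \<forall>N\<ge>no. \<bar>f N - c\<bar> < r" by blast
  qed
qed

lemma conv_set_meas:
  fixes g :: "nat \<Rightarrow> 'b \<Rightarrow> real"
  assumes [measurable]: "\<And>N. g N \<in> borel_measurable M"
  shows "{\<omega> \<in> space M. (\<lambda>N. g N \<omega>) \<longlonglongrightarrow> c} \<in> sets M"
proof -
  have eq: "((\<lambda>N. g N \<omega>) \<longlonglongrightarrow> c) = (\<forall>m::nat. \<exists>N0::nat. \<forall>N::nat. N0 \<le> N \<longrightarrow> \<bar>g N \<omega> - c\<bar> < 1 / real (Suc m))" for \<omega>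
    using tendsto_iff_nat[of "\<lambda>N. g N \<omega>" c] by simp
  have "{\<omega> \<in> space M. (\<lambda>N. g N \<omega>) \<longlonglongrightarrow> c} =
        {\<omega> \<in> space M. \<forall>m::nat. \<exists>N0::nat. \<forall>N::nat. N0 \<le> N \<longrightarrow> \<bar>g N \<omega> - c\<bar> < 1 / real (Suc m)}"
    by (simp only: eq)
  also have "\<dots> \<in> sets M" by measurable
  finally show ?thesis .
qed

lemma hit:
  fixes f :: "nat \<Rightarrow> nat"
  assumes "f 0 = 0" "\<And>N. f (Suc N) \<le> Suc (f N)" "f N \<ge> k"
  shows "\<exists>N'. f N' = k"
  using assms(3)
proof (induction N)
  case 0
  then show ?case using assms(1) by auto
next
  case (Suc N)
  show ?case
  proof (cases "f N \<ge> k")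
    case True
    then show ?thesis using Suc.IH by blast
  next
    case False
    then have "f (Suc N) = k" using Suc.prems assms(2)[of N] by linarith
    then show ?thesis by blast
  qed
qed

lemma to_infty:
  fixes c :: "nat \<Rightarrow> nat"
  assumes "(\<lambda>N. real (c N) / real N) \<longlonglongrightarrow> s" "s > 0"
  shows "filterlim c sequentially sequentially"
proof -
  have X: "LIM N sequentially. (real (c N) / real N) * real N :> at_top"
    by (rule filterlim_tendsto_pos_mult_at_top[OF assms(1) assms(2) filterlim_real_sequentially])
  moreover have ev: "eventually (\<lambda>N. (real (c N) / real N) * real N = real (c N)) sequentially"
    using eventually_gt_at_top[of "0::nat"] by eventually_elim simp
  have "LIM N sequentially. real (c N) :> at_top"
    using filterlim_cong[OF refl refl ev] X by blast
  then show ?thesis by (simp add: filterlim_sequentially_iff_filterlim_real)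
qed

lemma det_core:
  fixes e :: "nat \<Rightarrow> real" and c1 c2 :: "nat \<Rightarrow> nat"
  assumes c2_0: "c2 0 = 0" and c2_step: "\<And>N. c2 (Suc N) \<le> Suc (c2 N)" and c2_le: "\<And>N. c2 N \<le> N"
    and H1: "(\<lambda>N. e (c2 N) / real N) \<longlonglongrightarrow> 1" and H2: "(\<lambda>N. real (c2 N) / real N) \<longlonglongrightarrow> s'" and s': "s' > 0"
    and H3: "(\<lambda>N. real (c1 N) / real N) \<longlonglongrightarrow> s" and s: "s > 0"
  shows "(\<lambda>N. (e (c1 N) - real N) / real N) \<longlonglongrightarrow> s / s' - 1"
proof -
  have c2inf: "filterlim c2 sequentially sequentially" by (rule to_infty[OF H2 s'])
  have ex: "\<exists>N. c2 N = k" for k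
  proof -
    obtain N where "c2 N \<ge> k"
      using c2inf unfolding filterlim_at_top by (metis eventually_sequentially order.refl)
    then show ?thesis using hit[where f=c2 and N=N and k=k] c2_0 c2_step by blast
  qed
  define \<tau> where "\<tau> k = (LEAST N. c2 N = k)" for k
  have c2tau: "c2 (\<tau> k) = k" for k unfolding \<tau>_def by (rule LeastI_ex[OF ex])
  have tauge: "k \<le> \<tau> k" for k using c2_le[of "\<tau> k"] c2tau[of k] by simp
  have tauinf: "filterlim \<tau> sequentially sequentially"
    unfolding filterlim_at_top
  proof
    fix Z :: nat
    show "eventually (\<lambda>k. Z \<le> \<tau> k) sequentially"
      using eventually_ge_at_top[of Z] by eventually_elim (use tauge in \<open>auto intro: order.trans\<close>)
  qed
  have E1: "(\<lambda>k. e (c2 (\<tau> k)) / real (\<tau> k)) \<longlonglongrightarrow> 1" by (rule filterlim_compose[OF H1 tauinf])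
  have E2: "(\<lambda>k. real (c2 (\<tau> k)) / real (\<tau> k)) \<longlonglongrightarrow> s'" by (rule filterlim_compose[OF H2 tauinf])
  have E3: "(\<lambda>k. (e k / real (\<tau> k)) / (real k / real (\<tau> k))) \<longlonglongrightarrow> 1 / s'"
    using tendsto_divide[OF E1 E2] s' by (simp add: c2tau)
  have G: "(\<lambda>k. e k / real k) \<longlonglongrightarrow> 1 / s'"
  proof (rule Lim_transform_eventually[OF E3])
    show "eventually (\<lambda>k. (e k / real (\<tau> k)) / (real k / real (\<tau> k)) = e k / real k) sequentially"
      using eventually_gt_at_top[of "0::nat"]
    proof eventually_elim
      case (elim k)
      then have "real (\<tau> k) > 0" using tauge[of k] by simp
      then show ?case by (simp add: field_simps)
    qed
  qed
  have c1inf: "filterlim c1 sequentially sequentially" by (rule to_infty[OF H3 s])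
  have E4: "(\<lambda>N. e (c1 N) / real (c1 N)) \<longlonglongrightarrow> 1 / s'" by (rule filterlim_compose[OF G c1inf])
  have E5: "(\<lambda>N. e (c1 N) / real (c1 N) * (real (c1 N) / real N) - 1) \<longlonglongrightarrow> 1 / s' * s - 1"
    by (intro tendsto_intros E4 H3)
  show ?thesis
  proof (rule Lim_transform_eventually)
    show "(\<lambda>N. e (c1 N) / real (c1 N) * (real (c1 N) / real N) - 1) \<longlonglongrightarrow> s / s' - 1"
      using E5 by simp
    have "eventually (\<lambda>N. c1 N \<ge> 1) sequentially" using c1inf unfolding filterlim_at_top by blast
    moreover have "eventually (\<lambda>N. N \<ge> 1) sequentially" by (rule eventually_ge_at_top)
    ultimately show "eventually (\<lambda>N. e (c1 N) / real (c1 N) * (real (c1 N) / real N) - 1 = (e (c1 N) - real N) / real N) sequentially"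
      by eventually_elim (simp add: field_simps)
  qed
qed



lemma slln_cnt:
  fixes R :: "'r::countable pmf"
  assumes Rb: "map_pmf b R = bernoulli_pmf s" and s: "0 \<le> s" "s \<le> 1"
  shows "AE Z in iidG R. (\<lambda>N. real (cnt b Z N) / real N) \<longlonglongrightarrow> s"
proof -
  interpret prob_space "iidG R" by (rule prob_space_iidG)
  have ev: "AE Z in iidG R. \<exists>N0. \<forall>N\<ge>N0. \<bar>real (cnt b Z N) / real N - s\<bar> < e" if e: "e > 0" for e
  proof -
    define A where "A N = {Z. e \<le> \<bar>real (cnt b Z N) / real N - s\<bar>}" for N
    have Ameas: "A N \<in> sets (iidG R)" for N
      unfolding A_def cnt_def by (rule sets_prefix)
    define r where "r = exp (- 2 * e\<^sup>2)"
    have r: "0 < r" "r < 1" using e by (auto simp: r_def)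
    have bound: "measure (iidG R) (A N) \<le> 2 * r ^ N" for N
    proof (cases "N = 0")
      case True
      have "prob (A N) \<le> 1" by (rule prob_le_1)
      moreover have "r ^ N = 1" using True by simp
      ultimately show ?thesis by linarith
    next
      case False
      have "measure (iidG R) (A N) = measure_pmf.prob (replicate_pmf N R) {zs. e \<le> \<bar>real (length (filter b zs)) / real N - s\<bar>}"
        unfolding A_def cnt_def using measure_prefix_set[of R N "{zs. e \<le> \<bar>real (length (filter b zs)) / real N - s\<bar>}"] by simp
      also have "\<dots> = measure_pmf.prob (map_pmf (\<lambda>zs. length (filter b zs)) (replicate_pmf N R)) {k. e \<le> \<bar>real k / real N - s\<bar>}"
        by simp
      also have "\<dots> = measure_pmf.prob (binomial_pmf N s) {k. e \<le> \<bar>real k / real N - s\<bar>}"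
        by (simp only: binom_cnt[OF Rb s])
      also have "\<dots> \<le> 2 * exp (real_of_int (- 2 * int N) * e\<^sup>2)"
        by (rule binomial_distribution.prob_abs_ge') (use s e False in \<open>auto simp: binomial_distribution_def\<close>)
      also have "real_of_int (- 2 * int N) = -2 * real N" by simp
      also have "exp (-2 * real N * e\<^sup>2) = r ^ N"
        unfolding r_def by (subst exp_of_nat_mult[symmetric]) (simp add: mult_ac)
      finally show ?thesis .
    qed
    have summ: "summable (\<lambda>N. measure (iidG R) (A N))"
    proof (rule summable_comparison_test')
      show "summable (\<lambda>N. 2 * r ^ N)" using r by (intro summable_mult summable_geometric) auto
      show "norm (measure (iidG R) (A N)) \<le> 2 * r ^ N" for N using bound[of N] by simp
    qed
    have "AE Z in iidG R. eventually (\<lambda>N. Z \<in> space (iidG R) - A N) sequentially"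
      by (rule borel_cantelli_AE1[OF Ameas _ summ]) (simp add: emeasure_eq_measure)
    then show ?thesis
    proof (rule eventually_mono)
      fix Z assume "eventually (\<lambda>N. Z \<in> space (iidG R) - A N) sequentially"
      then obtain N0 where N0: "\<And>N. N \<ge> N0 \<Longrightarrow> Z \<in> space (iidG R) - A N"
        unfolding eventually_sequentially by blast
      have "\<bar>real (cnt b Z N) / real N - s\<bar> < e" if "N \<ge> N0" for N
      proof -
        have "Z \<notin> A N" using N0[OF that] by blast
        then show ?thesis unfolding A_def by (simp only: mem_Collect_eq not_le)
      qed
      then show "\<exists>N0. \<forall>N\<ge>N0. \<bar>real (cnt b Z N) / real N - s\<bar> < e" by blast
    qed
  qed
  have "AE Z in iidG R. \<forall>m::nat. \<exists>N0. \<forall>N\<ge>N0. \<bar>real (cnt b Z N) / real N - s\<bar> < 1 / real (Suc m)"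
  proof (subst AE_all_countable, intro allI)
    fix m :: nat
    show "AE Z in iidG R. \<exists>N0. \<forall>N\<ge>N0. \<bar>real (cnt b Z N) / real N - s\<bar> < 1 / real (Suc m)"
      by (rule ev) simp
  qed
  then show ?thesis
  proof (rule eventually_mono)
    fix Z assume "\<forall>m::nat. \<exists>N0. \<forall>N\<ge>N0. \<bar>real (cnt b Z N) / real N - s\<bar> < 1 / real (Suc m)"
    then show "(\<lambda>N. real (cnt b Z N) / real N) \<longlonglongrightarrow> s"
      using tendsto_iff_nat[of "\<lambda>N. real (cnt b Z N) / real N" s] by blast
  qed
qed

lemma CY_prefix: "CY L Y N = CY L (\<lambda>j. map Y [0..<N] ! j) N"
proof -
  have eq: "{j. j < N \<and> Y j = x} = {j. j < N \<and> map Y [0..<N] ! j = x}" for x by auto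
  show ?thesis unfolding CY_def by (rule ext) (simp only: eq)
qed

theorem core:
  fixes Q :: "bool list pmf" and est :: "(bool list \<Rightarrow> nat) \<Rightarrow> real"
  assumes z0Q: "replicate L False \<notin> set_pmf Q" and s: "0 < s" "s \<le> 1" and s': "0 < s'" "s' \<le> 1"
    and cons: "AE \<omega> in iid (mix s' Q (replicate L False)). (\<lambda>N. est (counts L N \<omega>) / real N) \<longlonglongrightarrow> 1"
  shows "AE \<omega> in iid (mix s Q (replicate L False)). (\<lambda>N. (est (counts L N \<omega>) - real N) / real N) \<longlonglongrightarrow> s / s' - 1"
proof -
  define R where "R = pair_pmf (pair_pmf (bernoulli_pmf s) (bernoulli_pmf s')) Q"
  define b1 where "b1 = (\<lambda>z::(bool \<times> bool) \<times> bool list. fst (fst z))"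
  define b2 where "b2 = (\<lambda>z::(bool \<times> bool) \<times> bool list. snd (fst z))"
  define y where "y = (\<lambda>z::(bool \<times> bool) \<times> bool list. snd z)"
  have HR1: "map_pmf (\<lambda>z. (b1 z, y z)) R = pair_pmf (bernoulli_pmf s) Q"
  proof -
    have "(\<lambda>z. (b1 z, y z)) = apfst fst" by (auto simp: b1_def y_def fun_eq_iff)
    then have "map_pmf (\<lambda>z. (b1 z, y z)) R = map_pmf (apfst fst) (pair_pmf (pair_pmf (bernoulli_pmf s) (bernoulli_pmf s')) Q)"
      by (simp only: R_def)
    also have "\<dots> = pair_pmf (map_pmf fst (pair_pmf (bernoulli_pmf s) (bernoulli_pmf s'))) Q"
      by (rule pair_map_pmf1[symmetric])
    also have "\<dots> = pair_pmf (bernoulli_pmf s) Q"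
      by (simp only: map_fst_pair_pmf)
    finally show ?thesis .
  qed
  have HR2: "map_pmf (\<lambda>z. (b2 z, y z)) R = pair_pmf (bernoulli_pmf s') Q"
  proof -
    have "(\<lambda>z. (b2 z, y z)) = apfst snd" by (auto simp: b2_def y_def fun_eq_iff)
    then have "map_pmf (\<lambda>z. (b2 z, y z)) R = map_pmf (apfst snd) (pair_pmf (pair_pmf (bernoulli_pmf s) (bernoulli_pmf s')) Q)"
      by (simp only: R_def)
    also have "\<dots> = pair_pmf (map_pmf snd (pair_pmf (bernoulli_pmf s) (bernoulli_pmf s'))) Q"
      by (rule pair_map_pmf1[symmetric])
    also have "\<dots> = pair_pmf (bernoulli_pmf s') Q"
      by (simp only: map_snd_pair_pmf)
    finally show ?thesis .
  qed
  have Hb1: "map_pmf b1 R = bernoulli_pmf s"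
  proof -
    have "map_pmf b1 R = map_pmf fst (map_pmf (\<lambda>z. (b1 z, y z)) R)" by (simp add: map_pmf_comp)
    then show ?thesis by (simp add: HR1 map_fst_pair_pmf)
  qed
  have Hb2: "map_pmf b2 R = bernoulli_pmf s'"
  proof -
    have "map_pmf b2 R = map_pmf fst (map_pmf (\<lambda>z. (b2 z, y z)) R)" by (simp add: map_pmf_comp)
    then show ?thesis by (simp add: HR2 map_fst_pair_pmf)
  qed
  have D1: "distr (iidG R) (iidG (mix s Q (replicate L False))) (Phi b1 y (replicate L False)) = iidG (mix s Q (replicate L False))"
    by (rule distr_Phi[OF HR1]) (use s z0Q in auto)
  have D2: "distr (iidG R) (iidG (mix s' Q (replicate L False))) (Phi b2 y (replicate L False)) = iidG (mix s' Q (replicate L False))"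
    by (rule distr_Phi[OF HR2]) (use s' z0Q in auto)
  have cons': "AE \<omega> in iidG (mix s' Q (replicate L False)). (\<lambda>N. est (counts L N \<omega>) / real N) \<longlonglongrightarrow> 1"
    using cons unfolding iid_eq .
  have "AE \<omega> in distr (iidG R) (iidG (mix s' Q (replicate L False))) (Phi b2 y (replicate L False)). (\<lambda>N. est (counts L N \<omega>) / real N) \<longlonglongrightarrow> 1"
    using cons' by (simp only: D2)
  then have A1: "AE Z in iidG R. (\<lambda>N. est (counts L N (Phi b2 y (replicate L False) Z)) / real N) \<longlonglongrightarrow> 1"
    by (rule AE_distrD[OF Phi_meas])
  have A2: "AE Z in iidG R. (\<lambda>N. real (cnt b2 Z N) / real N) \<longlonglongrightarrow> s'"
    by (rule slln_cnt[OF Hb2]) (use s' in auto)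
  have A3: "AE Z in iidG R. (\<lambda>N. real (cnt b1 Z N) / real N) \<longlonglongrightarrow> s"
    by (rule slln_cnt[OF Hb1]) (use s in auto)
  have A4: "AE Z in iidG R. (\<lambda>N. (est (counts L N (Phi b1 y (replicate L False) Z)) - real N) / real N) \<longlonglongrightarrow> s / s' - 1"
    using A1 A2 A3
  proof eventually_elim
    case (elim Z)
    define e where "e k = est (CY L (\<lambda>j. y (Z j)) k)" for k
    have "(\<lambda>N. (e (cnt b1 Z N) - real N) / real N) \<longlonglongrightarrow> s / s' - 1"
    proof (rule det_core)
      show "cnt b2 Z 0 = 0" by simp
      show "cnt b2 Z (Suc N) \<le> Suc (cnt b2 Z N)" for N by (simp add: cnt_Suc)
      show "cnt b2 Z N \<le> N" for N by (rule cnt_le)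
      show "(\<lambda>N. e (cnt b2 Z N) / real N) \<longlonglongrightarrow> 1"
        using elim(1) by (simp add: e_def counts_Phi)
      show "(\<lambda>N. real (cnt b2 Z N) / real N) \<longlonglongrightarrow> s'" by (rule elim(2))
      show "(\<lambda>N. real (cnt b1 Z N) / real N) \<longlonglongrightarrow> s" by (rule elim(3))
    qed (use s s' in auto)
    then show ?case by (simp add: e_def counts_Phi)
  qed
  have meas: "{\<omega> \<in> space (iidG (mix s Q (replicate L False))). (\<lambda>N. (est (counts L N \<omega>) - real N) / real N) \<longlonglongrightarrow> s / s' - 1}
      \<in> sets (iidG (mix s Q (replicate L False)))"
  proof (rule conv_set_meas)
    fix N
    have "(\<lambda>\<omega>. (est (counts L N \<omega>) - real N) / real N) =
          (\<lambda>\<omega>. (\<lambda>xs. (est (CY L (\<lambda>j. xs ! j) N) - real N) / real N) (map \<omega> [0..<N]))"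
      by (rule ext) (subst counts_CY, subst CY_prefix, simp)
    also have "\<dots> \<in> borel_measurable (iidG (mix s Q (replicate L False)))"
      by (rule meas_prefix_fun) simp
    finally show "(\<lambda>\<omega>. (est (counts L N \<omega>) - real N) / real N) \<in> borel_measurable (iidG (mix s Q (replicate L False)))" .
  qed
  have "AE \<omega> in distr (iidG R) (iidG (mix s Q (replicate L False))) (Phi b1 y (replicate L False)). (\<lambda>N. (est (counts L N \<omega>) - real N) / real N) \<longlonglongrightarrow> s / s' - 1"
    by (subst AE_distr_iff[OF Phi_meas meas]) (rule A4)
  then have "AE \<omega> in iidG (mix s Q (replicate L False)). (\<lambda>N. (est (counts L N \<omega>) - real N) / real N) \<longlonglongrightarrow> s / s' - 1"
    unfolding D1 .
  then show ?thesis by (simp only: iid_eq)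
qed

lemma sum_patterns_nonzero_alt:
  assumes "L > 0"
  shows "(\<Sum>x\<in>patterns L - {replicate L False}. (-1::real) ^ (wt x + 1)) = 1"
proof -
  have "(\<Sum>x\<in>patterns L. (-1::real) ^ (wt x + 1)) = - (\<Sum>x\<in>patterns L. (-1::real) ^ wt x)"
    by (simp add: sum_negf[symmetric])
  also have "\<dots> = 0" using sum_patterns_alt[OF assms] by simp
  finally have "(\<Sum>x\<in>patterns L. (-1::real) ^ (wt x + 1)) = 0" .
  moreover have "(\<Sum>x\<in>patterns L. (-1::real) ^ (wt x + 1)) =
      (-1) ^ (wt (replicate L False) + 1) + (\<Sum>x\<in>patterns L - {replicate L False}. (-1::real) ^ (wt x + 1))"
    by (rule sum.remove) (simp_all add: zero_in_patterns)
  ultimately show ?thesis by simp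
qed

lemma gamma_split:
  "gamma L P = (\<Sum>x\<in>patterns L - {replicate L False}. (-1) ^ (wt x + 1) * ln (pmf P x)) - ln (pmf P (replicate L False))"
proof -
  have "gamma L P = (-1) ^ (wt (replicate L False) + 1) * ln (pmf P (replicate L False)) +
     (\<Sum>x\<in>patterns L - {replicate L False}. (-1) ^ (wt x + 1) * ln (pmf P x))"
    unfolding gamma_def by (rule sum.remove) (simp_all add: zero_in_patterns)
  then show ?thesis by simp
qed

theorem transfer_pos:
  fixes P :: "bool list pmf" and est :: "(bool list \<Rightarrow> nat) \<Rightarrow> real"
  assumes L: "L \<ge> 1" and supp: "set_pmf P \<subseteq> patterns L" and pos: "\<forall>x\<in>patterns L. pmf P x > 0"
    and cons: "consistent L est"
  shows "AE \<omega> in iid P. (\<lambda>N. (est (counts L N \<omega>) - real N) / real N) \<longlonglongrightarrow>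
           pmf P (replicate L False) * (exp (gamma L P) - 1)"
proof -
  define z0 where "z0 = replicate L False"
  define one where "one = replicate L True"
  define q where "q = pmf P z0"
  have z0p: "z0 \<in> patterns L" and onep: "one \<in> patterns L"
    by (simp_all add: z0_def one_def zero_in_patterns ones_in_patterns)
  have ne: "one \<noteq> z0" using L by (cases L) (auto simp: one_def z0_def)
  have q0: "q > 0" using pos z0p by (simp add: q_def)
  have "q + pmf P one = measure_pmf.prob P {z0, one}"
    using ne by (simp add: measure_pmf.finite_measure_eq_sum_singleton measure_pmf_single q_def)
  also have "\<dots> \<le> 1" by simp
  finally have q1: "q < 1" using pos onep by force
  define Q where "Q = cond_pmf P (- {z0})"
  have "pmf P one > 0" using pos onep by blast
  then have "one \<in> set_pmf P" by (simp add: set_pmf_iff)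
  then have ne': "set_pmf P \<inter> - {z0} \<noteq> {}" using ne by blast
  have mc: "measure_pmf.prob P (- {z0}) = 1 - q"
    using measure_pmf.prob_compl[of "{z0}" P] by (simp add: Compl_eq_Diff_UNIV measure_pmf_single q_def)
  have pmfQ: "pmf Q x = (if x \<noteq> z0 then pmf P x / (1 - q) else 0)" for x
    unfolding Q_def by (simp add: pmf_cond[OF ne'] mc)
  have z0Q: "z0 \<notin> set_pmf Q" by (simp add: set_pmf_eq pmfQ)
  have Pmix: "mix (1 - q) Q z0 = P"
  proof (rule pmf_eqI)
    fix x show "pmf (mix (1 - q) Q z0) x = pmf P x"
      using q0 q1 z0Q by (subst pmf_mix) (auto simp: pmfQ q_def)
  qed
  define G where "G = (\<Sum>x\<in>patterns L - {z0}. (-1) ^ (wt x + 1) * ln (pmf P x))"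
  have gam: "gamma L P = G - ln q" unfolding G_def q_def z0_def by (rule gamma_split)
  define s' where "s' = (1 - q) / (1 - q + exp G)"
  have d: "1 - q + exp G > 0" using q1 by (simp add: add_pos_pos)
  have s'0: "0 < s'" "s' < 1"
  proof -
    show "0 < s'" using q1 d by (simp add: s'_def)
    have "1 - q < 1 - q + exp G" by simp
    then show "s' < 1" using d by (simp add: s'_def divide_less_eq)
  qed
  define P' where "P' = mix s' Q z0"
  have pmfP': "pmf P' x = (if x = z0 then 1 - s' else s' * pmf Q x)" for x
    unfolding P'_def using s'0 z0Q by (subst pmf_mix) auto
  have model: "in_model L P'"
    unfolding in_model_def
  proof (intro conjI ballI)
    show "set_pmf P' \<subseteq> patterns L"
    proof
      fix x assume "x \<in> set_pmf P'"
      then have nz: "pmf P' x \<noteq> 0" by (simp add: set_pmf_iff)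
      show "x \<in> patterns L"
      proof (cases "x = z0")
        case True then show ?thesis using z0p by simp
      next
        case False
        then have "pmf P x \<noteq> 0" using nz by (simp add: pmfP' pmfQ)
        then have "x \<in> set_pmf P" by (simp add: set_pmf_iff)
        then show ?thesis using supp by blast
      qed
    qed
  next
    fix x assume x: "x \<in> patterns L"
    show "pmf P' x > 0" using s'0 q1 pos x by (auto simp: pmfP' pmfQ)
  next
    have "gamma L P' = (\<Sum>x\<in>patterns L - {z0}. (-1) ^ (wt x + 1) * ln (pmf P' x)) - ln (pmf P' z0)"
      unfolding z0_def by (rule gamma_split)
    also have "(\<Sum>x\<in>patterns L - {z0}. (-1) ^ (wt x + 1) * ln (pmf P' x)) =
        (\<Sum>x\<in>patterns L - {z0}. (-1) ^ (wt x + 1) * ln (s' / (1 - q)) + (-1) ^ (wt x + 1) * ln (pmf P x))"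
    proof (rule sum.cong[OF refl])
      fix x assume x: "x \<in> patterns L - {z0}"
      have e1: "pmf P' x = s' / (1 - q) * pmf P x" using x by (simp add: pmfP' pmfQ)
      have pPx: "pmf P x > 0" using x pos by auto
      have pos1: "s' / (1 - q) > 0" using s'0 q1 by simp
      have "ln (pmf P' x) = ln (s' / (1 - q)) + ln (pmf P x)"
        unfolding e1 by (subst ln_mult) (use pos1 pPx in auto)
      then show "(-1) ^ (wt x + 1) * ln (pmf P' x) = (-1) ^ (wt x + 1) * ln (s' / (1 - q)) + (-1) ^ (wt x + 1) * ln (pmf P x)"
        by (simp add: distrib_left)
    qed
    also have "\<dots> = (\<Sum>x\<in>patterns L - {z0}. (-1) ^ (wt x + 1) * ln (s' / (1 - q))) + G"
      unfolding G_def by (rule sum.distrib)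
    also have "(\<Sum>x\<in>patterns L - {z0}. (-1) ^ (wt x + 1) * ln (s' / (1 - q))) = (\<Sum>x\<in>patterns L - {z0}. (-1) ^ (wt x + 1)) * ln (s' / (1 - q))"
      by (rule sum_distrib_right[symmetric])
    also have "(\<Sum>x\<in>patterns L - {z0}. (-1::real) ^ (wt x + 1)) = 1"
      unfolding z0_def using L by (intro sum_patterns_nonzero_alt) auto
    also have "pmf P' z0 = exp G / (1 - q + exp G)"
    proof -
      have "pmf P' z0 = 1 - s'" by (simp add: pmfP')
      also have "\<dots> = exp G / (1 - q + exp G)" using d by (simp add: s'_def field_simps)
      finally show ?thesis .
    qed
    also have "s' / (1 - q) = 1 / (1 - q + exp G)"
    proof -
      have nq: "1 - q \<noteq> 0" using q1 by simp
      show ?thesis unfolding s'_def using nq by simp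
    qed
    finally show "gamma L P' = 0"
      using q1 d by (simp add: ln_div ln_exp)
  qed
  have consP': "AE \<omega> in iid (mix s' Q z0). (\<lambda>N. est (counts L N \<omega>) / real N) \<longlonglongrightarrow> 1"
    using cons model unfolding consistent_def P'_def by blast
  have X: "AE \<omega> in iid (mix (1 - q) Q z0). (\<lambda>N. (est (counts L N \<omega>) - real N) / real N) \<longlonglongrightarrow> (1 - q) / s' - 1"
    using core[of L Q "1 - q" s' est] consP' z0Q q0 q1 s'0 unfolding z0_def by auto
  have Y: "AE \<omega> in iid P. (\<lambda>N. (est (counts L N \<omega>) - real N) / real N) \<longlonglongrightarrow> (1 - q) / s' - 1"
    using X unfolding Pmix .
  have eqc: "(1 - q) / s' - 1 = q * (exp (gamma L P) - 1)"
    using q0 q1 d by (simp add: s'_def gam exp_diff field_simps)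
  have eqc': "(1 - q) / s' - 1 = pmf P (replicate L False) * (exp (gamma L P) - 1)"
    using eqc by (simp only: q_def z0_def)
  show ?thesis using Y unfolding eqc' .
qed

definition mom :: "nat \<Rightarrow> real measure \<Rightarrow> nat \<Rightarrow> real" where
  "mom L F k = (LINT l|F. l ^ k * (1 - l) ^ (L - k))"

lemma mixing_facts:
  assumes "mixing_dist F"
  shows "prob_space F" "sets F = sets borel" "space F = UNIV" "AE l in F. l \<in> {0<..1}"
proof -
  show ps: "prob_space F" and st: "sets F = sets borel" using assms by (auto simp: mixing_dist_def)
  show "space F = UNIV" using sets_eq_imp_space_eq[OF st] by simp
  have "measure F {0<..1} = 1" using assms by (auto simp: mixing_dist_def)
  then show "AE l in F. l \<in> {0<..1}" by (rule prob_space.AE_prob_1[OF ps])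
qed

lemma poly_meas: "(\<lambda>l::real. l ^ k * (1 - l) ^ j) \<in> borel_measurable F" if "sets F = sets borel"
proof -
  have m: "(\<lambda>l::real. l ^ k * (1 - l) ^ j) \<in> borel_measurable borel" by measurable
  have eq: "borel_measurable F = borel_measurable borel" by (rule measurable_cong_sets[OF that refl])
  show ?thesis unfolding eq by (rule m)
qed

lemma mom_integrable:
  assumes "mixing_dist F"
  shows "integrable F (\<lambda>l. l ^ k * (1 - l) ^ j)"
proof -
  interpret prob_space F using mixing_facts[OF assms] by simp
  show ?thesis
  proof (rule integrable_const_bound[where B = 1])
    show "AE l in F. norm (l ^ k * (1 - l) ^ j) \<le> 1"
      using mixing_facts(4)[OF assms]
    proof (rule eventually_mono)
      fix l :: real assume "l \<in> {0<..1}"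
      then have "0 \<le> l ^ k" "l ^ k \<le> 1" "0 \<le> (1 - l) ^ j" "(1 - l) ^ j \<le> 1"
        by (auto intro: power_le_one)
      then show "norm (l ^ k * (1 - l) ^ j) \<le> 1" by (simp add: abs_mult mult_le_one)
    qed
    show "(\<lambda>l. l ^ k * (1 - l) ^ j) \<in> borel_measurable F"
      by (rule poly_meas) (use mixing_facts[OF assms] in simp)
  qed
qed

lemma mom_pos:
  assumes F: "mixing_dist F" and F1: "measure F {1} < 1"
  shows "0 < mom L F k"
proof -
  interpret prob_space F using mixing_facts[OF F] by simp
  have ae: "AE l in F. l \<in> {0<..1}" by (rule mixing_facts(4)[OF F])
  have nn: "AE l in F. 0 \<le> l ^ k * (1 - l) ^ (L - k)"
    using ae by (rule eventually_mono) auto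
  have "mom L F k \<ge> 0" unfolding mom_def by (rule integral_nonneg_AE[OF nn])
  moreover have "mom L F k \<noteq> 0"
  proof
    assume "mom L F k = 0"
    then have "AE l in F. l ^ k * (1 - l) ^ (L - k) = 0"
      unfolding mom_def using integral_nonneg_eq_0_iff_AE[OF mom_integrable[OF F] nn] by simp
    with ae have "AE l in F. l = 1"
      by eventually_elim (auto simp: power_eq_0_iff)
    then have "prob {l \<in> space F. l = 1} = 1"
      by (subst prob_Collect_eq_1) (use mixing_facts[OF F] in auto)
    moreover have "{l \<in> space F. l = 1} = {1}" using mixing_facts(3)[OF F] by auto
    ultimately show False using F1 by simp
  qed
  ultimately show ?thesis by simp
qed

lemma pmf_het:
  assumes F: "mixing_dist F"
  shows "pmf (het_pmf L F) x = (if x \<in> patterns L then mom L F (wt x) else 0)"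
proof -
  interpret prob_space F using mixing_facts[OF F] by simp
  define f where "f x = (if x \<in> patterns L then LINT l|F. l ^ wt x * (1 - l) ^ (L - wt x) else 0)" for x
  have nn: "0 \<le> f x" for x
  proof -
    have "AE l in F. 0 \<le> l ^ wt x * (1 - l) ^ (L - wt x)"
      using mixing_facts(4)[OF F] by (rule eventually_mono) auto
    then show ?thesis unfolding f_def by (auto intro: integral_nonneg_AE)
  qed
  have "(\<integral>\<^sup>+x. ennreal (f x) \<partial>count_space UNIV) = (\<Sum>x\<in>patterns L. ennreal (f x))"
    by (rule nn_integral_count_space') (auto simp: f_def)
  also have "\<dots> = ennreal (\<Sum>x\<in>patterns L. f x)"
    using nn by (simp add: sum_ennreal)
  also have "(\<Sum>x\<in>patterns L. f x) = (\<Sum>x\<in>patterns L. LINT l|F. l ^ wt x * (1 - l) ^ (L - wt x))"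
    by (simp add: f_def)
  also have "\<dots> = (LINT l|F. (\<Sum>x\<in>patterns L. l ^ wt x * (1 - l) ^ (L - wt x)))"
  proof -
    have "(LINT l|F. (\<Sum>x\<in>patterns L. l ^ wt x * (1 - l) ^ (L - wt x))) = (\<Sum>x\<in>patterns L. LINT l|F. l ^ wt x * (1 - l) ^ (L - wt x))"
      by (rule Bochner_Integration.integral_sum) (rule mom_integrable[OF F])
    then show ?thesis by simp
  qed
  also have "\<dots> = (LINT l|F. 1)"
    by (simp add: sum_patterns_binom)
  also have "\<dots> = 1" by (simp add: prob_space)
  finally have one: "(\<integral>\<^sup>+x. ennreal (f x) \<partial>count_space UNIV) = 1" by simp
  have "pmf (het_pmf L F) x = f x"
    unfolding het_pmf_def f_def[symmetric] by (rule pmf_embed_pmf[OF nn one])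
  then show ?thesis by (simp add: f_def mom_def)
qed

lemma het_props:
  assumes F: "mixing_dist F" and F1: "measure F {1} < 1"
  shows "set_pmf (het_pmf L F) \<subseteq> patterns L" "\<forall>x\<in>patterns L. pmf (het_pmf L F) x > 0"
  using mom_pos[OF F F1] by (auto simp: set_pmf_eq pmf_het[OF F] split: if_splits)

lemma gamma_het:
  assumes F: "mixing_dist F"
  shows "gamma L (het_pmf L F) = (\<Sum>k\<le>L. of_nat (L choose k) * ((-1) ^ (k + 1) * ln (mom L F k)))"
proof -
  have "gamma L (het_pmf L F) = (\<Sum>x\<in>patterns L. (-1) ^ (wt x + 1) * ln (mom L F (wt x)))"
    unfolding gamma_def by (rule sum.cong) (auto simp: pmf_het[OF F])
  also have "\<dots> = (\<Sum>k\<le>L. of_nat (L choose k) * ((-1) ^ (k + 1) * ln (mom L F k)))"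
    by (rule sum_patterns_wt)
  finally show ?thesis .
qed

theorem bias_het:
  assumes cons: "consistent L est" and L: "L \<ge> 1" and F: "mixing_dist F" and F1: "measure F {1} < 1"
  shows "asymp_rel_bias L est F (pmf (het_pmf L F) (replicate L False) * (exp (gamma L (het_pmf L F)) - 1))"
    and "pmf (het_pmf L F) (replicate L False) > 0"
proof -
  show "asymp_rel_bias L est F (pmf (het_pmf L F) (replicate L False) * (exp (gamma L (het_pmf L F)) - 1))"
    unfolding asymp_rel_bias_def
    by (rule transfer_pos[OF L het_props[OF F F1] cons])
  show "pmf (het_pmf L F) (replicate L False) > 0"
    using het_props(2)[OF F F1] zero_in_patterns by blast
qed

definition TP :: "real \<Rightarrow> real \<Rightarrow> real measure" where
  "TP u v = distr (measure_pmf (bernoulli_pmf (1/2))) borel (\<lambda>b. if b then u else v)"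

lemma TP_meas: "(\<lambda>b. if b then u else v) \<in> measurable (measure_pmf (bernoulli_pmf (1/2))) (borel :: real measure)"
  by simp

lemma TP_props:
  assumes u: "0 < u" "u \<le> 1" and v: "0 < v" "v < 1"
  shows "mixing_dist (TP u v)" "measure (TP u v) {1} < 1"
proof -
  have ps: "prob_space (TP u v)" unfolding TP_def
    by (rule prob_space.prob_space_distr[OF measure_pmf.prob_space_axioms TP_meas])
  have st: "sets (TP u v) = sets borel" by (simp add: TP_def)
  have "measure (TP u v) {0<..1} = measure_pmf.prob (bernoulli_pmf (1/2)) ((\<lambda>b. if b then u else v) -` {0<..1} \<inter> space (measure_pmf (bernoulli_pmf (1/2))))"
    unfolding TP_def by (rule measure_distr[OF TP_meas]) simp
  also have "(\<lambda>b. if b then u else v) -` {0<..1} \<inter> space (measure_pmf (bernoulli_pmf (1/2))) = UNIV"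
    using u v by auto
  also have "measure_pmf.prob (bernoulli_pmf (1/2)) UNIV = 1" by simp
  finally show "mixing_dist (TP u v)" using ps st by (simp add: mixing_dist_def)
  have "measure (TP u v) {1} = measure_pmf.prob (bernoulli_pmf (1/2)) ((\<lambda>b. if b then u else v) -` {1} \<inter> space (measure_pmf (bernoulli_pmf (1/2))))"
    unfolding TP_def by (rule measure_distr[OF TP_meas]) simp
  also have "\<dots> \<le> measure_pmf.prob (bernoulli_pmf (1/2)) {True}"
    by (rule measure_pmf.finite_measure_mono) (use v in \<open>auto split: if_splits\<close>)
  also have "\<dots> = 1/2" by (simp add: measure_pmf_single)
  finally show "measure (TP u v) {1} < 1" by simp
qed

lemma TP_integral:
  fixes f :: "real \<Rightarrow> real"
  assumes "f \<in> borel_measurable (borel :: real measure)"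
  shows "(LINT l|TP u v. f l) = (f u + f v) / 2"
proof -
  have "(LINT l|TP u v. f l) = (LINT b|measure_pmf (bernoulli_pmf (1/2)). f (if b then u else v))"
    unfolding TP_def by (rule integral_distr[OF TP_meas assms])
  also have "\<dots> = (f u + f v) / 2" by simp
  finally show ?thesis .
qed

lemma mom_TP: "mom L (TP u v) k = (u ^ k * (1 - u) ^ (L - k) + v ^ k * (1 - v) ^ (L - k)) / 2"
  unfolding mom_def by (rule TP_integral) measurable

lemma q_sign:
  fixes q g :: real assumes "q > 0"
  shows "q * (exp g - 1) > 0 \<longleftrightarrow> g > 0" "q * (exp g - 1) < 0 \<longleftrightarrow> g < 0" "q * (exp g - 1) \<le> 0 \<longleftrightarrow> g \<le> 0"
  using assms by (auto simp: mult_pos_pos mult_less_0_iff zero_less_mult_iff mult_le_0_iff)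

lemma gamma_L2_nonpos:
  assumes F: "mixing_dist F" and F1: "measure F {1} < 1"
  shows "gamma 2 (het_pmf 2 F) \<le> 0"
proof -
  interpret prob_space F using mixing_facts[OF F] by simp
  define m0 where "m0 = mom 2 F 0"
  define m1 where "m1 = mom 2 F 1"
  define m2 where "m2 = mom 2 F 2"
  have p0: "m0 > 0" and p1: "m1 > 0" and p2: "m2 > 0"
    using mom_pos[OF F F1] by (auto simp: m0_def m1_def m2_def)
  have set2: "{..2::nat} = {0, 1, 2}" by auto
  have g: "gamma 2 (het_pmf 2 F) = 2 * ln m1 - ln m0 - ln m2"
    by (simp add: gamma_het[OF F] set2 m0_def m1_def m2_def)
  define a where "a = m1 / m2"
  have a: "a > 0" using p1 p2 by (simp add: a_def)
  have pw: "2 * a * (l ^ 1 * (1 - l) ^ (2 - 1)) \<le> a\<^sup>2 * (l ^ 2 * (1 - l) ^ (2 - 2)) + l ^ 0 * (1 - l) ^ (2 - 0)" for l :: real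
  proof -
    have "0 \<le> (a * l - (1 - l))\<^sup>2" by simp
    then show ?thesis by (simp add: power2_eq_square algebra_simps)
  qed
  have int: "integrable F (\<lambda>l. l ^ k * (1 - l) ^ (2 - k))" for k by (rule mom_integrable[OF F])
  have i1: "integrable F (\<lambda>l. 2 * a * (l ^ 1 * (1 - l) ^ (2 - 1)))"
    by (intro integrable_mult_right int)
  have i2: "integrable F (\<lambda>l. a\<^sup>2 * (l ^ 2 * (1 - l) ^ (2 - 2)) + l ^ 0 * (1 - l) ^ (2 - 0))"
    using Bochner_Integration.integrable_add[OF integrable_mult_right[OF int[of 2]] int[of 0]] by simp
  have "(LINT l|F. 2 * a * (l ^ 1 * (1 - l) ^ (2 - 1))) \<le> (LINT l|F. a\<^sup>2 * (l ^ 2 * (1 - l) ^ (2 - 2)) + l ^ 0 * (1 - l) ^ (2 - 0))"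
    by (rule Bochner_Integration.integral_mono[OF i1 i2 pw])
  moreover have "(LINT l|F. 2 * a * (l ^ 1 * (1 - l) ^ (2 - 1))) = 2 * a * m1"
    unfolding m1_def mom_def by (rule integral_mult_right_zero)
  moreover have "(LINT l|F. a\<^sup>2 * (l ^ 2 * (1 - l) ^ (2 - 2)) + l ^ 0 * (1 - l) ^ (2 - 0)) = a\<^sup>2 * m2 + m0"
  proof -
    have "(LINT l|F. a\<^sup>2 * (l ^ 2 * (1 - l) ^ (2 - 2)) + l ^ 0 * (1 - l) ^ (2 - 0)) =
      (LINT l|F. a\<^sup>2 * (l ^ 2 * (1 - l) ^ (2 - 2))) + (LINT l|F. l ^ 0 * (1 - l) ^ (2 - 0))"
      by (rule Bochner_Integration.integral_add[OF integrable_mult_right[OF int[of 2]] int[of 0]])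
    also have "(LINT l|F. a\<^sup>2 * (l ^ 2 * (1 - l) ^ (2 - 2))) = a\<^sup>2 * m2"
      unfolding m2_def mom_def by (rule integral_mult_right_zero)
    also have "(LINT l|F. l ^ 0 * (1 - l) ^ (2 - 0)) = m0"
      unfolding m0_def mom_def ..
    finally show ?thesis .
  qed
  ultimately have "2 * a * m1 \<le> a\<^sup>2 * m2 + m0" using a by auto
  then have "2 * m1 * m1 / m2 \<le> m1 * m1 / m2 + m0"
    using p2 by (simp add: a_def power2_eq_square)
  then have "m1 * m1 / m2 \<le> m0" by simp
  then have "m1 * m1 \<le> m0 * m2" using p2 by (simp add: divide_le_eq)
  then have "ln (m1 * m1) \<le> ln (m0 * m2)" using p1 p0 p2 by simp
  then have "ln m1 + ln m1 \<le> ln m0 + ln m2" using p0 p1 p2 by (simp add: ln_mult)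
  then show ?thesis using g by simp
qed

lemma gamma_F1:
  assumes L: "L \<ge> 1"
  shows "(-1) ^ (L + 1) * gamma L (het_pmf L (TP 1 (1/2))) > 0"
proof -
  have F: "mixing_dist (TP 1 (1/2))" using TP_props[of 1 "1/2"] by simp
  define c0 :: real where "c0 = (1/2) ^ L / 2"
  have c0: "c0 > 0" by (simp add: c0_def)
  define D where "D = ln (1/2 + c0) - ln c0"
  have D: "D > 0" using c0 by (simp add: D_def)
  have mk: "ln (mom L (TP 1 (1/2)) k) = ln c0 + (if k = L then D else 0)" if "k \<le> L" for k
  proof -
    have half: "(1/2::real) ^ k * (1/2) ^ (L - k) = (1/2) ^ L"
      using that by (simp add: power_add[symmetric])
    have "mom L (TP 1 (1/2)) k = (if k = L then 1/2 + c0 else c0)"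
      using that by (auto simp: mom_TP half c0_def)
    then show ?thesis using c0 by (simp add: D_def)
  qed
  have "gamma L (het_pmf L (TP 1 (1/2))) = (\<Sum>k\<le>L. of_nat (L choose k) * ((-1) ^ (k + 1) * ln (mom L (TP 1 (1/2)) k)))"
    by (rule gamma_het[OF F])
  also have "\<dots> = (\<Sum>k\<le>L. - ln c0 * ((-1) ^ k * of_nat (L choose k)) + (if k = L then (-1) ^ (L + 1) * D else 0))"
    by (rule sum.cong) (auto simp: mk algebra_simps)
  also have "\<dots> = (\<Sum>k\<le>L. - ln c0 * ((-1) ^ k * of_nat (L choose k))) + (\<Sum>k\<le>L. if k = L then (-1) ^ (L + 1) * D else 0)"
    by (rule sum.distrib)
  also have "(\<Sum>k\<le>L. if k = L then (-1) ^ (L + 1) * D else 0) = (-1::real) ^ (L + 1) * D"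
    by (subst sum.delta) auto
  also have "(\<Sum>k\<le>L. - ln c0 * ((-1) ^ k * of_nat (L choose k))) = - ln c0 * (\<Sum>k\<le>L. (-1) ^ k * of_nat (L choose k))"
    by (rule sum_distrib_left[symmetric])
  also have "(\<Sum>k\<le>L. (-1) ^ k * of_nat (L choose k)) = (0::real)"
    using L by (intro choose_alternating_sum) auto
  finally have "gamma L (het_pmf L (TP 1 (1/2))) = (-1) ^ (L + 1) * D" by simp
  then have "(-1) ^ (L + 1) * gamma L (het_pmf L (TP 1 (1/2))) = ((-1) ^ (L + 1)) * ((-1) ^ (L + 1)) * D"
    by simp
  also have "((-1::real) ^ (L + 1)) * ((-1) ^ (L + 1)) = 1"
    by (simp add: power_add[symmetric] flip: power_mult_distrib)
  finally show ?thesis using D by simp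
qed

lemma D_calc:
  fixes m :: nat assumes m: "m \<ge> 1"
  shows "(1::real) \<le> (-1) ^ (m + 3) * (\<Sum>k\<le>Suc (Suc m). real (Suc (Suc m) choose k) * ((-1) ^ (k + 1) * real (min ((2*m+3)*k) ((m+1)^2*(Suc (Suc m)-k)))))"
proof -
  define g where "g k = min ((2*m+3)*k) ((m+1)^2*(Suc (Suc m)-k))" for k
  define f1 :: "nat \<Rightarrow> real" where "f1 k = real (Suc (Suc m) choose k) * ((-1) ^ (k + 1) * real ((2*m+3)*k))" for k
  define f2 :: "nat \<Rightarrow> real" where "f2 k = real (Suc (Suc m) choose k) * ((-1) ^ (k + 1) * real (g k))" for k
  have geq: "g k = (2*m+3)*k" if k: "k \<le> m" for k
  proof -
    have "(2*m+3)*k \<le> (2*m+3)*m" using k by simp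
    also have "(2*m+3)*m \<le> 2*(m+1)^2" by (simp add: power2_eq_square algebra_simps)
    also have "2*(m+1)^2 \<le> (m+1)^2*(Suc (Suc m)-k)"
    proof -
      have "2 \<le> Suc (Suc m) - k" using k by simp
      then show ?thesis by (simp add: mult.commute mult_le_mono2)
    qed
    finally show ?thesis by (simp add: g_def)
  qed
  have g1: "g (Suc m) = (m+1)^2"
  proof -
    have "(m+1)^2 \<le> (2*m+3)*Suc m" by (simp add: power2_eq_square algebra_simps)
    then show ?thesis by (simp add: g_def)
  qed
  have g2: "g (Suc (Suc m)) = 0" by (simp add: g_def)
  have S1: "(\<Sum>k\<le>Suc (Suc m). f1 k) = 0"
  proof -
    have "(\<Sum>k\<le>Suc (Suc m). f1 k) = - real (2*m+3) * (\<Sum>k\<le>Suc (Suc m). (-1) ^ k * of_nat k * of_nat (Suc (Suc m) choose k))"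
      by (simp add: f1_def sum_distrib_left algebra_simps)
    also have "(\<Sum>k\<le>Suc (Suc m). (-1) ^ k * of_nat k * of_nat (Suc (Suc m) choose k)) = (0::real)"
      by (rule choose_alternating_linear_sum) simp
    finally show ?thesis by simp
  qed
  have low: "(\<Sum>k\<le>m. f2 k) = (\<Sum>k\<le>m. f1 k)"
    by (rule sum.cong) (auto simp: f1_def f2_def geq)
  have e2: "(\<Sum>k\<le>Suc (Suc m). f2 k) = (\<Sum>k\<le>m. f2 k) + f2 (Suc m) + f2 (Suc (Suc m))" by simp
  have e1: "(\<Sum>k\<le>Suc (Suc m). f1 k) = (\<Sum>k\<le>m. f1 k) + f1 (Suc m) + f1 (Suc (Suc m))" by simp
  have S2: "(\<Sum>k\<le>Suc (Suc m). f2 k) = - f1 (Suc m) - f1 (Suc (Suc m)) + f2 (Suc m) + f2 (Suc (Suc m))"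
    using e1 e2 S1 low by linarith
  have key: "(-1::real) ^ (m + 3) * (- f1 (Suc m) - f1 (Suc (Suc m)) + f2 (Suc m) + f2 (Suc (Suc m))) =
      real (m+2) * (real (2*m+3) * real m - real ((m+1)^2))"
  proof (cases "even m")
    case True
    then show ?thesis by (simp add: f1_def f2_def g1 g2 algebra_simps)
  next
    case False
    then show ?thesis by (simp add: f1_def f2_def g1 g2 algebra_simps)
  qed
  have "real (m+2) * (real (2*m+3) * real m - real ((m+1)^2)) = real m ^ 3 + 3 * real m ^ 2 + real m - 2"
    by (simp add: power2_eq_square power3_eq_cube algebra_simps)
  also have "\<dots> \<ge> 1"
  proof -
    have m1: "real m \<ge> 1" using m by simp
    have "real m ^ 3 \<ge> 1" using m1 by (simp add: one_le_power)
    moreover have "real m ^ 2 \<ge> 1" using m1 by (simp add: one_le_power)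
    ultimately show ?thesis using m1 by linarith
  qed
  finally have "1 \<le> (-1::real) ^ (m + 3) * (\<Sum>k\<le>Suc (Suc m). f2 k)" using S2 key by simp
  then show ?thesis by (simp add: f2_def g_def)
qed

lemma avg_le:
  fixes x y A B M :: real
  assumes "x \<le> A" "y \<le> B" "A \<le> M" "B \<le> M" shows "(x + y) / 2 \<le> M"
proof -
  have "x + y \<le> M + M" using assms add_mono order_trans by meson
  then show ?thesis by simp
qed
lemma le_add_nn1: "(z::real) \<le> x \<Longrightarrow> 0 \<le> y \<Longrightarrow> z \<le> y + x" by linarith
lemma le_add_nn2: "(z::real) \<le> x \<Longrightarrow> 0 \<le> y \<Longrightarrow> z \<le> x + y" by linarith

lemma mk_bounds:
  fixes \<epsilon> :: real and a b :: real
  assumes e: "0 < \<epsilon>" "\<epsilon> \<le> 1/2" and k: "k \<le> L" and \<alpha>: "\<alpha> \<ge> 1" and \<beta>: "\<beta> \<ge> 1"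
    and a: "a = \<epsilon> ^ \<alpha>" and b: "b = \<epsilon> ^ \<beta>"
  shows "((1 - b) ^ k * b ^ (L - k) + a ^ k * (1 - a) ^ (L - k)) / 2 \<le> \<epsilon> ^ (min (\<alpha>*k) (\<beta>*(L-k)))"
    and "(1/2) ^ (L+1) * \<epsilon> ^ (min (\<alpha>*k) (\<beta>*(L-k))) \<le> ((1 - b) ^ k * b ^ (L - k) + a ^ k * (1 - a) ^ (L - k)) / 2"
proof -
  define g where "g = min (\<alpha>*k) (\<beta>*(L-k))"
  have a0: "0 < a" "a \<le> 1/2"
  proof -
    show "0 < a" using e a by simp
    have "a \<le> \<epsilon> ^ 1" unfolding a using e \<alpha> by (intro power_decreasing) auto
    then show "a \<le> 1/2" using e by simp
  qed
  have b0: "0 < b" "b \<le> 1/2"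
  proof -
    show "0 < b" using e b by simp
    have "b \<le> \<epsilon> ^ 1" unfolding b using e \<beta> by (intro power_decreasing) auto
    then show "b \<le> 1/2" using e by simp
  qed
  have t1: "a ^ k * (1 - a) ^ (L - k) \<le> \<epsilon> ^ (\<alpha>*k)"
  proof -
    have A: "a ^ k * (1 - a) ^ (L - k) \<le> a ^ k"
      using a0 by (intro mult_left_le power_le_one) auto
    have B: "a ^ k = \<epsilon> ^ (\<alpha>*k)" by (simp add: a power_mult)
    show ?thesis using A B by (simp only:)
  qed
  have t2: "(1 - b) ^ k * b ^ (L - k) \<le> \<epsilon> ^ (\<beta>*(L-k))"
  proof -
    have A: "(1 - b) ^ k * b ^ (L - k) \<le> b ^ (L - k)"
      using b0 by (intro mult_left_le_one_le power_le_one) auto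
    have B: "b ^ (L - k) = \<epsilon> ^ (\<beta>*(L-k))" by (simp add: b power_mult)
    show ?thesis using A B by (simp only:)
  qed
  have pg1: "\<epsilon> ^ (\<alpha>*k) \<le> \<epsilon> ^ g" unfolding g_def using e by (intro power_decreasing) auto
  have pg2: "\<epsilon> ^ (\<beta>*(L-k)) \<le> \<epsilon> ^ g" unfolding g_def using e by (intro power_decreasing) auto
  have up: "((1 - b) ^ k * b ^ (L - k) + a ^ k * (1 - a) ^ (L - k)) / 2 \<le> \<epsilon> ^ g"
    by (rule avg_le[OF t2 t1 pg2 pg1])
  then show "((1 - b) ^ k * b ^ (L - k) + a ^ k * (1 - a) ^ (L - k)) / 2 \<le> \<epsilon> ^ (min (\<alpha>*k) (\<beta>*(L-k)))"
    by (simp only: g_def)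
  have h1: "(1/2::real) ^ L \<le> (1 - a) ^ (L - k)"
  proof -
    have "(1/2::real) ^ L \<le> (1/2) ^ (L - k)" by (intro power_decreasing) auto
    also have "\<dots> \<le> (1 - a) ^ (L - k)" using a0 by (intro power_mono) auto
    finally show ?thesis .
  qed
  have h2: "(1/2::real) ^ L \<le> (1 - b) ^ k"
  proof -
    have "(1/2::real) ^ L \<le> (1/2) ^ k" using k by (intro power_decreasing) auto
    also have "\<dots> \<le> (1 - b) ^ k" using b0 by (intro power_mono) auto
    finally show ?thesis .
  qed
  have nn1: "0 \<le> a ^ k * (1 - a) ^ (L - k)" using a0 by simp
  have nn2: "0 \<le> (1 - b) ^ k * b ^ (L - k)" using b0 by simp
  have lowg: "(1/2) ^ L * \<epsilon> ^ g \<le> (1 - b) ^ k * b ^ (L - k) + a ^ k * (1 - a) ^ (L - k)"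
  proof (cases "\<alpha>*k \<le> \<beta>*(L-k)")
    case True
    then have gg: "g = \<alpha>*k" by (simp add: g_def)
    have "(1/2) ^ L * \<epsilon> ^ g = a ^ k * (1/2) ^ L" by (simp add: gg a power_mult)
    also have "\<dots> \<le> a ^ k * (1 - a) ^ (L - k)"
      using h1 a0 by (intro mult_left_mono) auto
    finally show ?thesis using nn2 by (rule le_add_nn1)
  next
    case False
    then have gg: "g = \<beta>*(L-k)" by (simp add: g_def)
    have "(1/2) ^ L * \<epsilon> ^ g = (1/2) ^ L * b ^ (L - k)" by (simp add: gg b power_mult)
    also have "\<dots> \<le> (1 - b) ^ k * b ^ (L - k)"
      using h2 b0 by (intro mult_right_mono) auto
    finally show ?thesis using nn1 by (rule le_add_nn2)
  qed
  then have "(1/2) ^ (L+1) * \<epsilon> ^ g \<le> ((1 - b) ^ k * b ^ (L - k) + a ^ k * (1 - a) ^ (L - k)) / 2"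
    by simp
  then show "(1/2) ^ (L+1) * \<epsilon> ^ (min (\<alpha>*k) (\<beta>*(L-k))) \<le> ((1 - b) ^ k * b ^ (L - k) + a ^ k * (1 - a) ^ (L - k)) / 2"
    by (simp only: g_def)
qed

lemma gamma_F2:
  fixes m :: nat assumes m: "m \<ge> 1"
  defines "L \<equiv> Suc (Suc m)"
  defines "B \<equiv> 2 ^ L * (real L + 1) * ln 2"
  defines "\<epsilon> \<equiv> exp (- (B + 1))"
  defines "F \<equiv> TP (1 - \<epsilon> ^ ((m+1)^2)) (\<epsilon> ^ (2*m+3))"
  shows "mixing_dist F" "measure F {1} < 1" "1 \<le> (-1) ^ L * gamma L (het_pmf L F)"
proof -
  define \<alpha> :: nat where "\<alpha> = 2*m+3"
  define \<beta> :: nat where "\<beta> = (m+1)^2"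
  define a where "a = \<epsilon> ^ \<alpha>"
  define b where "b = \<epsilon> ^ \<beta>"
  have F_eq: "F = TP (1 - b) a" by (simp add: F_def a_def b_def \<alpha>_def \<beta>_def)
  have B0: "B \<ge> 0" by (simp add: B_def)
  have e0: "0 < \<epsilon>" by (simp add: \<epsilon>_def)
  have e1: "\<epsilon> \<le> 1/2"
  proof -
    have "ln 2 < (1::real)" by (rule ln_2_less_1)
    then have "- (B + 1) \<le> - ln 2" using B0 by linarith
    then have "\<epsilon> \<le> exp (- ln 2)" unfolding \<epsilon>_def by simp
    also have "exp (- ln 2) = (1/2::real)" by (simp add: exp_minus)
    finally show ?thesis .
  qed
  have \<alpha>1: "\<alpha> \<ge> 1" and \<beta>1: "\<beta> \<ge> 1" by (simp_all add: \<alpha>_def \<beta>_def)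
  have a0: "0 < a" "a < 1"
  proof -
    show "0 < a" using e0 by (simp add: a_def)
    have "a \<le> \<epsilon> ^ 1" unfolding a_def using e0 e1 \<alpha>1 by (intro power_decreasing) auto
    then show "a < 1" using e1 by simp
  qed
  have b0: "0 < b" "b < 1"
  proof -
    show "0 < b" using e0 by (simp add: b_def)
    have "b \<le> \<epsilon> ^ 1" unfolding b_def using e0 e1 \<beta>1 by (intro power_decreasing) auto
    then show "b < 1" using e1 by simp
  qed
  have u: "0 < 1 - b" "1 - b \<le> 1" using b0 by auto
  show mF: "mixing_dist F" unfolding F_eq by (rule TP_props(1)[OF u a0])
  show "measure F {1} < 1" unfolding F_eq by (rule TP_props(2)[OF u a0])
  define g where "g k = min (\<alpha>*k) (\<beta>*(L-k))" for k
  have momk: "mom L F k = ((1 - b) ^ k * b ^ (L - k) + a ^ k * (1 - a) ^ (L - k)) / 2" for k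
    unfolding F_eq mom_TP by simp
  have up: "mom L F k \<le> \<epsilon> ^ g k" if "k \<le> L" for k
    unfolding momk g_def by (rule mk_bounds(1)[OF e0 e1 that \<alpha>1 \<beta>1 a_def b_def])
  have lo: "(1/2) ^ (L+1) * \<epsilon> ^ g k \<le> mom L F k" if "k \<le> L" for k
    unfolding momk g_def by (rule mk_bounds(2)[OF e0 e1 that \<alpha>1 \<beta>1 a_def b_def])
  define r where "r k = ln (mom L F k) - real (g k) * ln \<epsilon>" for k
  have rb: "\<bar>r k\<bar> \<le> (real L + 1) * ln 2" if k: "k \<le> L" for k
  proof -
    have pos: "0 < (1/2::real) ^ (L+1) * \<epsilon> ^ g k" using e0 by simp
    have mpos: "0 < mom L F k" using pos lo[OF k] by linarith
    have "ln (mom L F k) \<le> ln (\<epsilon> ^ g k)" using up[OF k] mpos by simp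
    also have "ln (\<epsilon> ^ g k) = real (g k) * ln \<epsilon>" using e0 by (simp add: ln_realpow)
    finally have r1: "r k \<le> 0" by (simp add: r_def)
    have "ln ((1/2::real) ^ (L+1) * \<epsilon> ^ g k) \<le> ln (mom L F k)" using lo[OF k] pos by simp
    moreover have "ln ((1/2::real) ^ (L+1) * \<epsilon> ^ g k) = - ((real L + 1) * ln 2) + real (g k) * ln \<epsilon>"
      using e0 by (simp add: ln_mult ln_realpow ln_div algebra_simps)
    ultimately have r2: "- ((real L + 1) * ln 2) \<le> r k" by (simp add: r_def)
    show ?thesis using r1 r2 by linarith
  qed
  define D where "D = (\<Sum>k\<le>L. real (L choose k) * ((-1) ^ (k + 1) * real (g k)))"
  define E where "E = (\<Sum>k\<le>L. real (L choose k) * ((-1) ^ (k + 1) * r k))"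
  have gam: "gamma L (het_pmf L F) = ln \<epsilon> * D + E"
  proof -
    have "gamma L (het_pmf L F) = (\<Sum>k\<le>L. of_nat (L choose k) * ((-1) ^ (k + 1) * ln (mom L F k)))"
      by (rule gamma_het[OF mF])
    also have "\<dots> = (\<Sum>k\<le>L. ln \<epsilon> * (real (L choose k) * ((-1) ^ (k + 1) * real (g k))) + real (L choose k) * ((-1) ^ (k + 1) * r k))"
      by (rule sum.cong) (auto simp: r_def algebra_simps)
    also have "\<dots> = (\<Sum>k\<le>L. ln \<epsilon> * (real (L choose k) * ((-1) ^ (k + 1) * real (g k)))) + E"
      unfolding E_def by (rule sum.distrib)
    also have "(\<Sum>k\<le>L. ln \<epsilon> * (real (L choose k) * ((-1) ^ (k + 1) * real (g k)))) = ln \<epsilon> * D"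
      unfolding D_def by (rule sum_distrib_left[symmetric])
    finally show ?thesis .
  qed
  have Dc: "1 \<le> (-1) ^ (m + 3) * D"
    using D_calc[OF m] by (simp add: D_def L_def g_def \<alpha>_def \<beta>_def)
  have Eb: "\<bar>E\<bar> \<le> B"
  proof -
    have "\<bar>E\<bar> \<le> (\<Sum>k\<le>L. \<bar>real (L choose k) * ((-1) ^ (k + 1) * r k)\<bar>)"
      unfolding E_def by (rule sum_abs)
    also have "\<dots> \<le> (\<Sum>k\<le>L. real (L choose k) * ((real L + 1) * ln 2))"
      by (rule sum_mono) (auto simp: abs_mult intro!: mult_left_mono rb)
    also have "\<dots> = (\<Sum>k\<le>L. real (L choose k)) * ((real L + 1) * ln 2)"
      by (simp add: sum_distrib_right)
    also have "(\<Sum>k\<le>L. real (L choose k)) = 2 ^ L"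
      by (simp flip: of_nat_sum add: choose_row_sum)
    finally show ?thesis by (simp add: B_def mult_ac)
  qed
  have lne: "ln \<epsilon> = - (B + 1)" by (simp add: \<epsilon>_def)
  have sgn: "(-1::real) ^ (m + 3) = - ((-1) ^ L)"
  proof -
    have "m + 3 = Suc L" by (simp add: L_def)
    then have "(-1::real) ^ (m + 3) = (-1) ^ Suc L" by (simp only:)
    then show ?thesis by (simp only: power_Suc mult_minus1)
  qed
  have "(-1) ^ L * gamma L (het_pmf L F) = (B + 1) * ((-1) ^ (m + 3) * D) + (-1) ^ L * E"
    by (simp add: gam lne sgn algebra_simps)
  moreover have "(B + 1) * ((-1) ^ (m + 3) * D) \<ge> B + 1"
    using Dc B0 by (simp add: mult_le_cancel_left1)
  moreover have "(-1) ^ L * E \<ge> - B"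
  proof -
    have "\<bar>(-1::real) ^ L * E\<bar> = \<bar>E\<bar>" by (simp add: abs_mult)
    then show ?thesis using Eb by linarith
  qed
  ultimately show "1 \<le> (-1) ^ L * gamma L (het_pmf L F)" by linarith
qed

theorem proposition2:
  fixes L :: nat and est :: "(bool list \<Rightarrow> nat) \<Rightarrow> real"
  assumes "consistent L est"
  shows "(L = 2 \<longrightarrow> (\<forall>F. mixing_dist F \<and> measure F {1} < 1 \<longrightarrow>
              (\<exists>c. c \<le> 0 \<and> asymp_rel_bias L est F c)))
       \<and> (L \<ge> 3 \<longrightarrow>
              (\<exists>F c. mixing_dist F \<and> measure F {1} < 1 \<and> c > 0 \<and> asymp_rel_bias L est F c)
            \<and> (\<exists>F c. mixing_dist F \<and> measure F {1} < 1 \<and> c < 0 \<and> asymp_rel_bias L est F c))"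
proof -
  note cons = assms
  have bias: "asymp_rel_bias L est F (pmf (het_pmf L F) (replicate L False) * (exp (gamma L (het_pmf L F)) - 1))
      \<and> pmf (het_pmf L F) (replicate L False) > 0"
    if L1: "L \<ge> 1" and F: "mixing_dist F" and F1: "measure F {1} < 1" for F
    using bias_het[OF cons L1 F F1] by blast
  have P1: "L = 2 \<longrightarrow> (\<forall>F. mixing_dist F \<and> measure F {1} < 1 \<longrightarrow> (\<exists>c. c \<le> 0 \<and> asymp_rel_bias L est F c))"
  proof (intro impI allI)
    fix F assume L2: "L = 2" and F: "mixing_dist F \<and> measure F {1} < 1"
    have b: "asymp_rel_bias L est F (pmf (het_pmf L F) (replicate L False) * (exp (gamma L (het_pmf L F)) - 1))"
      and q: "pmf (het_pmf L F) (replicate L False) > 0"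
      using bias[of F] F L2 by auto
    have "gamma L (het_pmf L F) \<le> 0" using gamma_L2_nonpos[of F] F L2 by simp
    then have "pmf (het_pmf L F) (replicate L False) * (exp (gamma L (het_pmf L F)) - 1) \<le> 0"
      using q_sign(3)[OF q] by blast
    then show "\<exists>c. c \<le> 0 \<and> asymp_rel_bias L est F c" using b by blast
  qed
  have P2: "L \<ge> 3 \<longrightarrow>
              (\<exists>F c. mixing_dist F \<and> measure F {1} < 1 \<and> c > 0 \<and> asymp_rel_bias L est F c)
            \<and> (\<exists>F c. mixing_dist F \<and> measure F {1} < 1 \<and> c < 0 \<and> asymp_rel_bias L est F c)"
  proof
    assume L3: "L \<ge> 3"
    define m where "m = L - 2"
    have m1: "m \<ge> 1" and Lm: "L = Suc (Suc m)" using L3 by (auto simp: m_def)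
    have L1: "L \<ge> 1" using L3 by simp
    define F1 where "F1 = TP 1 (1/2)"
    have F1p: "mixing_dist F1" "measure F1 {1} < 1" using TP_props[of 1 "1/2"] by (auto simp: F1_def)
    have g1: "(-1) ^ (L + 1) * gamma L (het_pmf L F1) > 0" unfolding F1_def by (rule gamma_F1[OF L1])
    obtain F2 where F2p: "mixing_dist F2" "measure F2 {1} < 1" and g2: "1 \<le> (-1) ^ L * gamma L (het_pmf L F2)"
      unfolding Lm using gamma_F2[OF m1] by blast
    define c1 where "c1 = pmf (het_pmf L F1) (replicate L False) * (exp (gamma L (het_pmf L F1)) - 1)"
    define c2 where "c2 = pmf (het_pmf L F2) (replicate L False) * (exp (gamma L (het_pmf L F2)) - 1)"
    have b1: "asymp_rel_bias L est F1 c1" and q1: "pmf (het_pmf L F1) (replicate L False) > 0"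
      using bias[OF L1 F1p] by (auto simp: c1_def)
    have b2: "asymp_rel_bias L est F2 c2" and q2: "pmf (het_pmf L F2) (replicate L False) > 0"
      using bias[OF L1 F2p] by (auto simp: c2_def)
    show "(\<exists>F c. mixing_dist F \<and> measure F {1} < 1 \<and> c > 0 \<and> asymp_rel_bias L est F c)
            \<and> (\<exists>F c. mixing_dist F \<and> measure F {1} < 1 \<and> c < 0 \<and> asymp_rel_bias L est F c)"
    proof (cases "even L")
      case True
      then have "gamma L (het_pmf L F2) \<ge> 1" using g2 by simp
      then have c2p: "c2 > 0" unfolding c2_def using q_sign(1)[OF q2] by simp
      have "gamma L (het_pmf L F1) < 0" using g1 True by simp
      then have c1n: "c1 < 0" unfolding c1_def using q_sign(2)[OF q1] by simp
      show ?thesis using F1p F2p b1 b2 c1n c2p by blast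
    next
      case False
      then have "- gamma L (het_pmf L F2) \<ge> 1" using g2 by simp
      then have c2n: "c2 < 0" unfolding c2_def using q_sign(2)[OF q2] by simp
      have "gamma L (het_pmf L F1) > 0" using g1 False by simp
      then have c1p: "c1 > 0" unfolding c1_def using q_sign(1)[OF q1] by simp
      show ?thesis using F1p F2p b1 b2 c1p c2n by blast
    qed
  qed
  show ?thesis using P1 P2 by blast
qed

end
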